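(* Let $N\ge K\ge1$, $\mathbf{H}\in\mathbb{R}^{N\times K}$ full column rank with orthonormal eigenvectors $\mathbf{u}_1,\ldots,\mathbf{u}_N$ of $\mathbf{H}\mathbf{H}^T$, $\mathbf{H}\mathbf{H}^T\mathbf{u}_i=\rho_i^2\mathbf{u}_i$, $\rho_1^2\ge\cdots\ge\rho_N^2\ge0$, $\rho_1^2>\rho_N^2$. Fix positive integers $M_1,M_2$ with $M=M_1+M_2\le N$, a positive integer $N_b$, $\sigma_x^2,\sigma_0^2>0$ and $P_{FA}\in(0,1)$, and set $\gamma=\mathbb{Q}_{F(M_1N_b,M_2N_b)}^{-1}(P_{FA})$. For $\boldsymbol{\Phi}=[\boldsymbol{\Phi}_s^T,\boldsymbol{\Phi}_o^T]^T\in\mathbb{R}^{M\times N}$ with $\boldsymbol{\Phi}_s\in\mathbb{R}^{M_1\times N}$, $\boldsymbol{\Phi}_o\in\mathbb{R}^{M_2\times N}$ and $\boldsymbol{\Phi}\boldsymbol{\Phi}^T=\frac1M\mathbf{I}_M$, define $$\tilde\eta_{lb}(\boldsymbol{\Phi})=\frac{\sigma_0^2+\sigma_x^2\lambda_1(\mathbf{H}^T\boldsymbol{\Phi}_o^T\boldsymbol{\Phi}_o\mathbf{H})}{\sigma_0^2+\sigma_x^2\lambda_{M_1}(\mathbf{H}^T\boldsymbol{\Phi}_s^T\boldsymbol{\Phi}_s\mathbf{H})},\qquad \tilde\eta_{ub}(\boldsymbol{\Phi})=\frac{\sigma_0^2+\sigma_x^2\lambda_{M_2}(\mathbf{H}^T\boldsymbol{\Phi}_o^T\boldsymbol{\Phi}_o\mathbf{H})}{\sigma_0^2+\sigma_x^2\lambda_{1}(\mathbf{H}^T\boldsymbol{\Phi}_s^T\boldsymbol{\Phi}_s\mathbf{H})},$$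 and $P_{D,lb}(\boldsymbol{\Phi})=\mathbb{Q}_{F(M_1N_b,M_2N_b)}(\tilde\eta_{lb}(\boldsymbol{\Phi})\gamma)$, $P_{D,ub}(\boldsymbol{\Phi})=\mathbb{Q}_{F(M_1N_b,M_2N_b)}(\tilde\eta_{ub}(\boldsymbol{\Phi})\gamma)$. Then the design $\boldsymbol{\Phi}_s=\frac1{\sqrt M}\mathbf{T}_s[\mathbf{u}_1,\ldots,\mathbf{u}_{M_1}]^T$, $\boldsymbol{\Phi}_o=\frac1{\sqrt M}\mathbf{T}_o[\mathbf{u}_{N-M_2+1},\ldots,\mathbf{u}_N]^T$, with $\mathbf{T}_s,\mathbf{T}_o$ any orthogonal matrices of sizes $M_1\times M_1$ and $M_2\times M_2$, simultaneously maximizes $P_{D,lb}(\boldsymbol{\Phi})$ and $P_{D,ub}(\boldsymbol{\Phi})$ over all such $\boldsymbol{\Phi}$.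
   Context: $\mathbb{Q}_{F(d_1,d_2)}(x)=\Pr(X>x)$ for $X$ $F$-distributed with $(d_1,d_2)$ degrees of freedom; it is continuous and strictly decreasing on $(0,\infty)$, and $\mathbb{Q}^{-1}_{F(d_1,d_2)}$ denotes its inverse. For a symmetric matrix $\mathbf{A}$, $\lambda_i(\mathbf{A})$ is its $i$-th largest eigenvalue, with the convention $\lambda_i(\mathbf{A})=0$ if $i$ exceeds the size of $\mathbf{A}$. In the paper, $P_{D,lb}$ and $P_{D,ub}$ are the expressions used as lower and upper bounds on the detection probability of the energy-ratio test with measurement matrix $\boldsymbol{\Phi}$ and false-alarm probability $P_{FA}$. *)

theory Defs
  imports "HOL-Probability.Probability" "HOL-Computational_Algebra.Polynomial"
    "Jordan_Normal_Form.Char_Poly" "Jordan_Normal_Form.DL_Rank"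
begin

definition F_density :: "nat \<Rightarrow> nat \<Rightarrow> real \<Rightarrow> real" where
  "F_density d1 d2 t =
     (if t > 0 then
        (real d1 / real d2) powr (real d1 / 2) * t powr (real d1 / 2 - 1)
        * (1 + real d1 * t / real d2) powr (- (real d1 + real d2) / 2)
        / Beta (real d1 / 2) (real d2 / 2)
      else 0)"

definition QF :: "nat \<Rightarrow> nat \<Rightarrow> real \<Rightarrow> real" where
  "QF d1 d2 x = (LINT t:{x<..}|lborel. F_density d1 d2 t)"

definition QF_inv :: "nat \<Rightarrow> nat \<Rightarrow> real \<Rightarrow> real" where
  "QF_inv d1 d2 p = (THE x. x > 0 \<and> QF d1 d2 x = p)"

text \<open>Eigenvalues (with multiplicity, as roots of the characteristic polynomial) in
  non-increasing order; lambda i A is the i-th largest (1-based), 0 if i exceeds the size.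
  For symmetric real matrices the characteristic polynomial splits over the reals.\<close>
definition eigs_desc :: "real mat \<Rightarrow> real list" where
  "eigs_desc A = rev (sorted_list_of_multiset (proots (char_poly A)))"

definition lambda :: "nat \<Rightarrow> real mat \<Rightarrow> real" where
  "lambda i A = (if 1 \<le> i \<and> i \<le> dim_row A then eigs_desc A ! (i - 1) else 0)"

definition eta_lb :: "real mat \<Rightarrow> real \<Rightarrow> real \<Rightarrow> nat \<Rightarrow> nat \<Rightarrow> real mat \<Rightarrow> real mat \<Rightarrow> real" where
  "eta_lb H sx2 s02 M1 M2 Phis Phio =
     (s02 + sx2 * lambda 1 (transpose_mat H * transpose_mat Phio * Phio * H)) /
     (s02 + sx2 * lambda M1 (transpose_mat H * transpose_mat Phis * Phis * H))"

definition eta_ub :: "real mat \<Rightarrow> real \<Rightarrow> real \<Rightarrow> nat \<Rightarrow> nat \<Rightarrow> real mat \<Rightarrow> real mat \<Rightarrow> real" where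
  "eta_ub H sx2 s02 M1 M2 Phis Phio =
     (s02 + sx2 * lambda M2 (transpose_mat H * transpose_mat Phio * Phio * H)) /
     (s02 + sx2 * lambda 1 (transpose_mat H * transpose_mat Phis * Phis * H))"

definition PD_lb :: "real mat \<Rightarrow> real \<Rightarrow> real \<Rightarrow> nat \<Rightarrow> nat \<Rightarrow> nat \<Rightarrow> real \<Rightarrow> real mat \<Rightarrow> real mat \<Rightarrow> real" where
  "PD_lb H sx2 s02 M1 M2 Nb PFA Phis Phio =
     QF (M1 * Nb) (M2 * Nb)
        (eta_lb H sx2 s02 M1 M2 Phis Phio * QF_inv (M1 * Nb) (M2 * Nb) PFA)"

definition PD_ub :: "real mat \<Rightarrow> real \<Rightarrow> real \<Rightarrow> nat \<Rightarrow> nat \<Rightarrow> nat \<Rightarrow> real \<Rightarrow> real mat \<Rightarrow> real mat \<Rightarrow> real" where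
  "PD_ub H sx2 s02 M1 M2 Nb PFA Phis Phio =
     QF (M1 * Nb) (M2 * Nb)
        (eta_ub H sx2 s02 M1 M2 Phis Phio * QF_inv (M1 * Nb) (M2 * Nb) PFA)"

definition admissible :: "nat \<Rightarrow> nat \<Rightarrow> nat \<Rightarrow> real mat \<Rightarrow> real mat \<Rightarrow> bool" where
  "admissible N M1 M2 Phis Phio \<longleftrightarrow>
     Phis \<in> carrier_mat M1 N \<and> Phio \<in> carrier_mat M2 N \<and>
     (Phis @\<^sub>r Phio) * transpose_mat (Phis @\<^sub>r Phio)
       = (1 / real (M1 + M2)) \<cdot>\<^sub>m 1\<^sub>m (M1 + M2)"

definition rows_of :: "nat \<Rightarrow> nat \<Rightarrow> nat \<Rightarrow> (nat \<Rightarrow> real vec) \<Rightarrow> real mat" where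
  "rows_of m N a u = mat m N (\<lambda>(i, j). u (a + i) $ j)"

end

theory Submission
  imports Defs "Jordan_Normal_Form.Schur_Decomposition"
begin


lemma sym_eig_real:
  fixes A :: "real mat" and a :: complex
  assumes A: "A \<in> carrier_mat n n" and sym: "transpose_mat A = A"
    and ev: "eigenvalue (map_mat complex_of_real A) a"
  shows "Im a = 0"
proof -
  let ?A = "map_mat complex_of_real A"
  from ev obtain v where v: "v \<in> carrier_vec n" "v \<noteq> 0\<^sub>v n" and Av: "?A *\<^sub>v v = a \<cdot>\<^sub>v v"
    unfolding eigenvalue_def eigenvector_def using A by auto
  define s where "s = (\<Sum>i<n. cnj (v $ i) * (?A *\<^sub>v v) $ i)"
  define r where "r = (\<Sum>i<n. cmod (v $ i) ^ 2)"
  have symA: "\<And>i j. i < n \<Longrightarrow> j < n \<Longrightarrow> A $$ (j, i) = A $$ (i, j)"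
    using sym A by (metis carrier_matD index_transpose_mat(1))
  have s1: "s = (\<Sum>i<n. \<Sum>j<n. cnj (v $ i) * of_real (A $$ (i, j)) * v $ j)"
    unfolding s_def using A v
    by (auto simp: scalar_prod_def sum_distrib_left mult.assoc intro!: sum.cong)
  have "cnj s = (\<Sum>i<n. \<Sum>j<n. v $ i * of_real (A $$ (i, j)) * cnj (v $ j))"
    unfolding s1 by (simp add: mult.assoc)
  also have "\<dots> = (\<Sum>j<n. \<Sum>i<n. v $ i * of_real (A $$ (i, j)) * cnj (v $ j))"
    by (rule sum.swap)
  also have "\<dots> = s" unfolding s1
    by (intro sum.cong refl, simp add: symA mult.commute mult.left_commute)
  finally have cs: "cnj s = s" .
  have "s = a * (\<Sum>i<n. cnj (v $ i) * v $ i)"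
    unfolding s_def Av using v by (auto simp: sum_distrib_left mult.commute mult.left_commute)
  also have "(\<Sum>i<n. cnj (v $ i) * v $ i) = of_real r"
    unfolding r_def of_real_sum of_real_power by (intro sum.cong refl, metis complex_norm_square mult.commute of_real_power)
  finally have sa: "s = a * of_real r" .
  have "r > 0"
  proof -
    from v obtain i where i: "i < n" "v $ i \<noteq> 0"
      by (metis carrier_vecD eq_vecI index_zero_vec(1) index_zero_vec(2))
    have "cmod (v $ i) ^ 2 > 0" using i by auto
    moreover have "cmod (v $ i) ^ 2 \<le> r" unfolding r_def
      by (rule member_le_sum, insert i, auto)
    ultimately show ?thesis by linarith
  qed
  from cs sa have "cnj a * of_real r = a * of_real r" by simp
  hence "cnj a = a" using \<open>r > 0\<close> by simp
  thus ?thesis by (metis Reals_cnj_iff complex_is_Real_iff)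
qed

lemma map_poly_of_real_linprod:
  "map_poly complex_of_real (\<Prod>e\<leftarrow>es. [:-e,1:]) = (\<Prod>e\<leftarrow>es. [:-complex_of_real e,1:])"
proof -
  interpret mp: map_poly_comm_ring_hom "complex_of_real" ..
  show ?thesis by (induct es) (simp_all add: mp.hom_mult del: mult_pCons_left mult_pCons_right)
qed

lemma sym_char_poly_split:
  fixes A :: "real mat"
  assumes A: "A \<in> carrier_mat n n" and sym: "transpose_mat A = A"
  shows "\<exists>es. char_poly A = (\<Prod>a\<leftarrow>es. [:-a,1:]) \<and> length es = n"
proof -
  let ?A = "map_mat complex_of_real A"
  have A': "?A \<in> carrier_mat n n" using A by auto
  from char_poly_factorized[OF A'] obtain as where
    cf: "char_poly ?A = (\<Prod>a\<leftarrow>as. [:- a, 1:])" and len: "length as = n" by auto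
  have re: "a = complex_of_real (Re a)" if a: "a \<in> set as" for a
  proof -
    have "poly (char_poly ?A) a = 0" unfolding cf poly_prod_list_zero_iff using a by auto
    hence "eigenvalue ?A a" using eigenvalue_root_char_poly[OF A'] by auto
    from sym_eig_real[OF A sym this] show ?thesis by (simp add: complex_eq_iff)
  qed
  define es where "es = map Re as"
  have "map_poly complex_of_real (char_poly A) = char_poly ?A"
    by (rule of_real_hom.char_poly_hom[OF A, symmetric])
  also have "\<dots> = (\<Prod>a\<leftarrow>map (\<lambda>e. complex_of_real (Re e)) as. [:- a, 1:])"
    unfolding cf by (rule arg_cong[where f = prod_list], insert re, auto)
  also have "\<dots> = map_poly complex_of_real (\<Prod>e\<leftarrow>es. [:-e,1:])"
    unfolding map_poly_of_real_linprod es_def by (simp add: o_def)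
  finally have eq: "map_poly complex_of_real (char_poly A) = map_poly complex_of_real (\<Prod>e\<leftarrow>es. [:-e,1:])" .
  have "char_poly A = (\<Prod>e\<leftarrow>es. [:-e,1:])"
  proof (rule poly_eqI)
    fix i
    from arg_cong[OF eq, of "\<lambda>p. coeff p i"] show "coeff (char_poly A) i = coeff (\<Prod>e\<leftarrow>es. [:-e,1:]) i"
      by (simp add: coeff_map_poly)
  qed
  thus ?thesis using len es_def by (metis length_map)
qed

lemma real_sq_pos: "(v :: real vec) \<in> carrier_vec n \<Longrightarrow> v \<noteq> 0\<^sub>v n \<Longrightarrow> v \<bullet> v > 0"
  using conjugate_square_greater_0_vec[of v n] by simp

lemma real_sq_nonneg: "(v :: real vec) \<bullet> v \<ge> 0"
  using conjugate_square_ge_0_vec[of v] by simp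

lemma onb_completion:
  fixes v :: "real vec"
  assumes v: "v \<in> carrier_vec n" and v1: "v \<bullet> v = 1"
  shows "\<exists>W. W \<in> carrier_mat n n \<and> transpose_mat W * W = 1\<^sub>m n \<and> col W 0 = v"
proof -
  have v0: "v \<noteq> 0\<^sub>v n" using v v1 by auto
  have n0: "n > 0" using v v1 by (cases n, auto simp: scalar_prod_def)
  interpret cof_vec_space n "TYPE(real)" .
  define b where "b = basis_completion v"
  from basis_completion[OF v v0, folded b_def]
  have bc: "set b \<subseteq> carrier_vec n" and dist: "distinct b" and ind: "\<not> lin_dep (set b)"
    and lenb: "length b = n" and hdb: "hd b = v" by auto
  from hdb lenb n0 obtain vs where bv: "b = v # vs" by (cases b, auto)
  define ws where "ws = gram_schmidt n b"
  from gram_schmidt_result[OF bc dist ind ws_def]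
  have orth: "corthogonal ws" and wsc: "set ws \<subseteq> carrier_vec n" and lenw: "length ws = n" by (auto simp: lenb)
  have hdw: "hd ws = v" unfolding ws_def bv using v by simp
  define nrm where "nrm = (\<lambda>w :: real vec. (1 / sqrt (w \<bullet> w)) \<cdot>\<^sub>v w)"
  define ws' where "ws' = map nrm ws"
  define W where "W = mat_of_cols n ws'"
  have W: "W \<in> carrier_mat n n" unfolding W_def ws'_def using lenw by auto
  have wsi: "ws ! i \<in> carrier_vec n" if "i < n" for i using wsc lenw that by auto
  have colW: "col W i = nrm (ws ! i)" if "i < n" for i
    unfolding W_def ws'_def using that lenw wsi[OF that] by (auto simp: nrm_def)
  have orth': "ws ! i \<bullet> ws ! j = (if i = j then ws ! i \<bullet> ws ! i else 0)"
    and pos: "ws ! i \<bullet> ws ! i > 0" if "i < n" "j < n" for i j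
  proof -
    from corthogonalD[OF orth, of i j] that lenw
    have "(ws ! i \<bullet> ws ! j = 0) = (i \<noteq> j)" by simp
    moreover from corthogonalD[OF orth, of i i] that lenw
    have "ws ! i \<bullet> ws ! i \<noteq> 0" by simp
    ultimately show "ws ! i \<bullet> ws ! j = (if i = j then ws ! i \<bullet> ws ! i else 0)" by auto
    show "ws ! i \<bullet> ws ! i > 0" using \<open>ws ! i \<bullet> ws ! i \<noteq> 0\<close> real_sq_nonneg[of "ws ! i"] by linarith
  qed
  have "transpose_mat W * W = 1\<^sub>m n"
  proof (rule eq_matI)
    fix i j assume ij: "i < dim_row (1\<^sub>m n)" "j < dim_col (1\<^sub>m n)"
    hence i: "i < n" and j: "j < n" by auto
    have "(transpose_mat W * W) $$ (i, j) = col W i \<bullet> col W j"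
      using W i j by (simp add: row_transpose)
    also have "\<dots> = (1 / sqrt (ws ! i \<bullet> ws ! i)) * (1 / sqrt (ws ! j \<bullet> ws ! j)) * (ws ! i \<bullet> ws ! j)"
      unfolding colW[OF i] colW[OF j] nrm_def using wsi[OF i] wsi[OF j] by simp
    also have "\<dots> = 1\<^sub>m n $$ (i, j)"
    proof (cases "i = j")
      case True
      have p: "ws ! i \<bullet> ws ! i > 0" using pos[OF i i] .
      have "sqrt (ws ! i \<bullet> ws ! i) * sqrt (ws ! i \<bullet> ws ! i) = ws ! i \<bullet> ws ! i"
        using p by simp
      thus ?thesis using True i p by (simp add: field_simps)
    next
      case False
      thus ?thesis using orth'[OF i j] i j by simp
    qed
    finally show "(transpose_mat W * W) $$ (i, j) = 1\<^sub>m n $$ (i, j)" .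
  qed (insert W, auto)
  moreover have "col W 0 = v"
  proof -
    have "ws ! 0 = v" using hdw lenw n0 by (cases ws, auto)
    thus ?thesis using colW[OF n0] v1 by (simp add: nrm_def)
  qed
  ultimately show ?thesis using W by blast
qed

definition dg :: "nat \<Rightarrow> real list \<Rightarrow> real mat" where
  "dg n ds = mat n n (\<lambda>(i,j). if i = j then ds ! i else 0)"

lemma dg_carrier[simp]: "dg n ds \<in> carrier_mat n n" unfolding dg_def by auto
lemma dg_dims[simp]: "dim_row (dg n ds) = n" "dim_col (dg n ds) = n" unfolding dg_def by auto

lemma orth_right:
  fixes W :: "real mat"
  assumes "W \<in> carrier_mat n n" "transpose_mat W * W = 1\<^sub>m n"
  shows "W * transpose_mat W = 1\<^sub>m n"
  by (rule mat_mult_left_right_inverse[of "transpose_mat W" n W], insert assms, auto)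

theorem spectral:
  fixes A :: "real mat"
  assumes "A \<in> carrier_mat n n" "transpose_mat A = A"
  shows "\<exists>Q ds. Q \<in> carrier_mat n n \<and> transpose_mat Q * Q = 1\<^sub>m n \<and> length ds = n \<and>
    sorted (rev ds) \<and> A = Q * dg n ds * transpose_mat Q \<and> char_poly A = (\<Prod>a\<leftarrow>ds. [:-a,1:])"
  using assms
proof (induct n arbitrary: A)
  case 0
  hence A: "A \<in> carrier_mat 0 0" by auto
  have cp: "char_poly A = 1"
  proof -
    from degree_monic_char_poly[OF A] have "degree (char_poly A) = 0" "coeff (char_poly A) 0 = 1" by auto
    thus ?thesis using degree_0_id[of "char_poly A"] by (simp add: one_pCons)
  qed
  show ?case
    by (rule exI[of _ "1\<^sub>m 0"], rule exI[of _ "[]"], insert A cp, auto intro!: eq_matI)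
next
  case (Suc m A)
  let ?n = "Suc m"
  have A: "A \<in> carrier_mat ?n ?n" and sym: "transpose_mat A = A" using Suc by auto
  from sym_char_poly_split[OF A sym] obtain es where
    cpA: "char_poly A = (\<Prod>a\<leftarrow>es. [:-a,1:])" and les: "length es = ?n" by auto
  define mu where "mu = Max (set es)"
  have es_ne: "set es \<noteq> {}" using les by auto
  have mu_in: "mu \<in> set es" unfolding mu_def using es_ne by auto
  have mu_max: "e \<le> mu" if "e \<in> set es" for e unfolding mu_def using that by auto
  have "poly (char_poly A) mu = 0" unfolding cpA poly_prod_list_zero_iff using mu_in by auto
  hence evA: "eigenvalue A mu" using eigenvalue_root_char_poly[OF A] by auto
  define w where "w = find_eigenvector A mu"
  from find_eigenvector[OF A evA, folded w_def]
  have w: "w \<in> carrier_vec ?n" "w \<noteq> 0\<^sub>v ?n" and Aw: "A *\<^sub>v w = mu \<cdot>\<^sub>v w"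
    unfolding eigenvector_def using A by auto
  define v where "v = (1 / sqrt (w \<bullet> w)) \<cdot>\<^sub>v w"
  have wpos: "w \<bullet> w > 0" using real_sq_pos[OF w] .
  have v: "v \<in> carrier_vec ?n" unfolding v_def using w by auto
  have v1: "v \<bullet> v = 1" unfolding v_def using w wpos
    by (simp add: field_simps)
  have Av: "A *\<^sub>v v = mu \<cdot>\<^sub>v v" unfolding v_def using A w Aw
    by (simp add: mult_mat_vec smult_smult_assoc mult.commute)
  from onb_completion[OF v v1] obtain W where W: "W \<in> carrier_mat ?n ?n"
    and WW: "transpose_mat W * W = 1\<^sub>m ?n" and W0: "col W 0 = v" by auto
  have WW': "W * transpose_mat W = 1\<^sub>m ?n" using orth_right[OF W WW] .
  define B where "B = transpose_mat W * A * W"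
  have B: "B \<in> carrier_mat ?n ?n" unfolding B_def using W A by auto
  have symB: "transpose_mat B = B"
  proof -
    have "transpose_mat B = transpose_mat W * transpose_mat (transpose_mat W * A)"
      unfolding B_def using W A by (subst transpose_mult[of _ ?n ?n], auto)
    also have "transpose_mat (transpose_mat W * A) = transpose_mat A * W"
      using W A by (subst transpose_mult[of _ ?n ?n], auto)
    finally show ?thesis unfolding B_def sym using W A by (simp add: assoc_mult_mat[of _ ?n ?n _ ?n _ ?n])
  qed
  have AWB: "A = W * B * transpose_mat W"
  proof -
    have "W * B * transpose_mat W = (W * transpose_mat W) * A * (W * transpose_mat W)"
      unfolding B_def using W A by (simp add: assoc_mult_mat[of _ ?n ?n _ ?n _ ?n])
    thus ?thesis using WW' A by simp
  qed
  have Bcol: "B $$ (i, 0) = (if i = 0 then mu else 0)" if i: "i < ?n" for i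
  proof -
    have "B = transpose_mat W * (A * W)" unfolding B_def using W A by (simp add: assoc_mult_mat[of _ ?n ?n _ ?n _ ?n])
    hence "B $$ (i, 0) = row (transpose_mat W) i \<bullet> col (A * W) 0" using W A i by simp
    also have "col (A * W) 0 = A *\<^sub>v col W 0" using A W by (intro eq_vecI, auto)
    also have "\<dots> = mu \<cdot>\<^sub>v col W 0" unfolding W0 Av ..
    also have "row (transpose_mat W) i \<bullet> (mu \<cdot>\<^sub>v col W 0) = mu * (col W i \<bullet> col W 0)"
      using W i by simp
    also have "col W i \<bullet> col W 0 = (transpose_mat W * W) $$ (i, 0)" using W i by simp
    also have "\<dots> = (if i = 0 then 1 else 0)" unfolding WW using i by simp
    finally show ?thesis by simp
  qed
  have Brow: "B $$ (0, j) = (if j = 0 then mu else 0)" if j: "j < ?n" for j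
  proof -
    have "B $$ (0, j) = transpose_mat B $$ (j, 0)" using B j by simp
    thus ?thesis using symB Bcol[OF j] by simp
  qed
  obtain B1 B2 B0 B3 where sb: "split_block B 1 1 = (B1, B2, B0, B3)" by (cases "split_block B 1 1", auto)
  from split_block[OF sb, of m m] B
  have B1: "B1 \<in> carrier_mat 1 1" and B2: "B2 \<in> carrier_mat 1 m" and B0: "B0 \<in> carrier_mat m 1"
    and B3: "B3 \<in> carrier_mat m m" and Bblock: "B = four_block_mat B1 B2 B0 B3" by auto
  have B3def: "B3 = mat m m (\<lambda>(i,j). B $$ (i + 1, j + 1))" using sb B unfolding split_block_def Let_def by auto
  have B1id: "B1 = mat 1 1 (\<lambda>_. mu)" using sb B Bcol[of 0] unfolding split_block_def Let_def by (auto intro!: eq_matI)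
  have B2id: "B2 = 0\<^sub>m 1 m" using sb B Brow unfolding split_block_def Let_def by (auto intro!: eq_matI)
  have B0id: "B0 = 0\<^sub>m m 1" using sb B Bcol unfolding split_block_def Let_def by (auto intro!: eq_matI)
  have symB3: "transpose_mat B3 = B3"
  proof (rule eq_matI)
    fix i j assume "i < dim_row B3" "j < dim_col B3"
    hence i: "i < m" and j: "j < m" using B3 by auto
    have "B $$ (j + 1, i + 1) = transpose_mat B $$ (i + 1, j + 1)" using B i j by simp
    thus "transpose_mat B3 $$ (i, j) = B3 $$ (i, j)" unfolding B3def using symB i j by simp
  qed (insert B3, auto)
  from Suc(1)[OF B3 symB3] obtain Q3 ds3 where Q3: "Q3 \<in> carrier_mat m m"
    and QQ3: "transpose_mat Q3 * Q3 = 1\<^sub>m m" and lds3: "length ds3 = m" and sds3: "sorted (rev ds3)"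
    and B3eq: "B3 = Q3 * dg m ds3 * transpose_mat Q3" and cp3: "char_poly B3 = (\<Prod>a\<leftarrow>ds3. [:-a,1:])"
    by blast
  have simAB: "similar_mat A B"
    by (rule similar_matI[of A B W "transpose_mat W" ?n], insert A B W WW WW' AWB, auto)
  have "char_poly A = char_poly B" using char_poly_similar[OF simAB] .
  also have "\<dots> = char_poly B1 * char_poly B3" unfolding Bblock B0id
    by (rule char_poly_four_block_zeros_col[OF B1 B2 B3])
  also have "char_poly B1 = [:-mu, 1:]"
    by (simp add: B1id char_poly_defs det_def sign_def)
  finally have cpA2: "char_poly A = (\<Prod>a\<leftarrow>mu # ds3. [:-a,1:])" unfolding cp3 by simp
  have ds3_le: "d \<le> mu" if d: "d \<in> set ds3" for d
  proof -
    have "poly (char_poly A) d = 0" unfolding cpA2 poly_prod_list_zero_iff using d by auto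
    hence "d \<in> set es" unfolding cpA poly_prod_list_zero_iff by auto
    thus ?thesis by (rule mu_max)
  qed
  define ds where "ds = mu # ds3"
  have sds: "sorted (rev ds)" unfolding ds_def using sds3 ds3_le by (auto simp: sorted_append)
  define Q' where "Q' = four_block_mat (1\<^sub>m 1) (0\<^sub>m 1 m) (0\<^sub>m m 1) Q3"
  have Q': "Q' \<in> carrier_mat ?n ?n" unfolding Q'_def using Q3 by auto
  have Q't: "transpose_mat Q' = four_block_mat (1\<^sub>m 1) (0\<^sub>m 1 m) (0\<^sub>m m 1) (transpose_mat Q3)"
    unfolding Q'_def using Q3 by (subst transpose_four_block_mat, auto)
  have dgb: "dg ?n ds = four_block_mat (mat 1 1 (\<lambda>_. mu)) (0\<^sub>m 1 m) (0\<^sub>m m 1) (dg m ds3)"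
    unfolding ds_def dg_def by (rule eq_matI, auto)
  have QQ': "transpose_mat Q' * Q' = 1\<^sub>m ?n"
    unfolding Q't unfolding Q'_def using Q3 QQ3
    by (subst mult_four_block_mat[of _ 1 1 _ m _ m _ _ 1 _ m], auto intro!: eq_matI)
  have BQ: "B = Q' * dg ?n ds * transpose_mat Q'"
    unfolding Q't dgb unfolding Q'_def
    apply (subst mult_four_block_mat[of _ 1 1 _ m _ m _ _ 1 _ m], insert Q3, auto)
    apply (subst mult_four_block_mat[of _ 1 1 _ m _ m _ _ 1 _ m], insert Q3, auto)
    apply (unfold Bblock B1id B2id B0id B3eq)
    by (rule cong_four_block_mat, auto intro!: eq_matI)
  define Q where "Q = W * Q'"
  have Q: "Q \<in> carrier_mat ?n ?n" unfolding Q_def using W Q' by auto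
  have "transpose_mat Q * Q = transpose_mat Q' * (transpose_mat W * W) * Q'"
    unfolding Q_def using W Q' by (simp add: transpose_mult[of _ ?n ?n] assoc_mult_mat[of _ ?n ?n _ ?n _ ?n])
  hence QQ: "transpose_mat Q * Q = 1\<^sub>m ?n" using WW QQ' Q' by simp
  have "A = Q * dg ?n ds * transpose_mat Q"
    unfolding AWB BQ Q_def using W Q'
    by (simp add: transpose_mult[of _ ?n ?n] assoc_mult_mat[of _ ?n ?n _ ?n _ ?n] mult_carrier_mat[of _ ?n ?n _ ?n])
  thus ?case using Q QQ lds3 sds cpA2 unfolding ds_def by (intro exI[of _ Q] exI[of _ "mu # ds3"], auto)
qed

lemma proots_linprod: "proots (\<Prod>a\<leftarrow>ds. [:-a,1:]) = mset (ds :: real list)"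
proof (induct ds)
  case (Cons a ds)
  have nz: "(\<Prod>a\<leftarrow>ds. [:-a,1:]) \<noteq> (0 :: real poly)" unfolding prod_list_zero_iff by auto
  have "proots (\<Prod>a\<leftarrow>a # ds. [:-a,1:]) = proots [:-a,1:] + proots (\<Prod>a\<leftarrow>ds. [:-a,1:])"
    using nz by (simp add: proots_mult del: mult_pCons_left)
  thus ?case using Cons by simp
qed simp

lemma eigs_desc_split:
  assumes "char_poly A = (\<Prod>a\<leftarrow>ds. [:-a,1:])" "sorted (rev ds)"
  shows "eigs_desc A = ds"
proof -
  have "proots (char_poly A) = mset ds"
    unfolding assms(1) by (rule proots_linprod)
  hence "sorted_list_of_multiset (proots (char_poly A)) = sort ds" by simp
  also have "sort ds = rev ds" by (rule properties_for_sort, insert assms(2), auto)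
  finally show ?thesis unfolding eigs_desc_def by simp
qed

lemma dg_mult:
  assumes a: "a \<in> carrier_vec K"
  shows "dg K ds *\<^sub>v a = vec K (\<lambda>i. ds ! i * a $ i)"
proof (rule eq_vecI)
  fix i assume "i < dim_vec (vec K (\<lambda>i. ds ! i * a $ i))"
  hence i: "i < K" by simp
  have "(dg K ds *\<^sub>v a) $ i = (\<Sum>j\<in>{0..<K}. (if i = j then ds ! i else 0) * a $ j)"
    using i a unfolding dg_def by (simp add: scalar_prod_def)
  also have "\<dots> = (\<Sum>j\<in>{0..<K}. if i = j then ds ! i * a $ j else 0)"
    by (rule sum.cong, auto)
  also have "\<dots> = ds ! i * a $ i" using i by simp
  finally show "(dg K ds *\<^sub>v a) $ i = vec K (\<lambda>i. ds ! i * a $ i) $ i" using i by simp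
qed (insert a, auto)

lemma quad_form:
  fixes Q :: "real mat"
  assumes Q: "Q \<in> carrier_mat K K" and QQ: "transpose_mat Q * Q = 1\<^sub>m K"
    and Aeq: "A = Q * dg K ds * transpose_mat Q" and x: "x \<in> carrier_vec K"
  shows "x = Q *\<^sub>v (transpose_mat Q *\<^sub>v x)"
    "x \<bullet> x = (transpose_mat Q *\<^sub>v x) \<bullet> (transpose_mat Q *\<^sub>v x)"
    "x \<bullet> (A *\<^sub>v x) = (\<Sum>i<K. ds ! i * ((transpose_mat Q *\<^sub>v x) $ i)^2)"
proof -
  let ?a = "transpose_mat Q *\<^sub>v x"
  have QQ': "Q * transpose_mat Q = 1\<^sub>m K" using orth_right[OF Q QQ] .
  have a: "?a \<in> carrier_vec K" using Q x by auto
  show x1: "x = Q *\<^sub>v ?a"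
    using Q x QQ' by (simp add: assoc_mult_mat_vec[symmetric, of _ K K _ K])
  show "x \<bullet> x = ?a \<bullet> ?a"
  proof -
    have "?a \<bullet> ?a = x \<bullet> (Q *\<^sub>v ?a)" using transpose_vec_mult_scalar[OF Q a x] .
    thus ?thesis using x1 by simp
  qed
  have "A *\<^sub>v x = Q *\<^sub>v (dg K ds *\<^sub>v ?a)"
    unfolding Aeq using Q x by (simp add: assoc_mult_mat_vec[of _ K K _ K])
  moreover have "dg K ds *\<^sub>v ?a \<in> carrier_vec K" by (rule mult_mat_vec_carrier[OF dg_carrier a])
  ultimately have "x \<bullet> (A *\<^sub>v x) = ?a \<bullet> (dg K ds *\<^sub>v ?a)"
    using transpose_vec_mult_scalar[OF Q, of "dg K ds *\<^sub>v ?a" x] x by simp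
  also have "dg K ds *\<^sub>v ?a = vec K (\<lambda>i. ds ! i * ?a $ i)" by (rule dg_mult[OF a])
  also have "?a \<bullet> vec K (\<lambda>i. ds ! i * ?a $ i) = (\<Sum>i<K. ds ! i * (?a $ i)^2)"
    using a by (auto simp: scalar_prod_def power2_eq_square lessThan_atLeast0 intro!: sum.cong)
  finally show "x \<bullet> (A *\<^sub>v x) = (\<Sum>i<K. ds ! i * ((transpose_mat Q *\<^sub>v x) $ i)^2)" .
qed

lemma ker_exists:
  fixes cs :: "real vec list"
  assumes cs: "set cs \<subseteq> carrier_vec p" and len: "length cs < p"
  shows "\<exists>a \<in> carrier_vec p. a \<noteq> 0\<^sub>v p \<and> (\<forall>c\<in>set cs. c \<bullet> a = 0)"
proof -
  define k where "k = p - 1"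
  have k: "k < p" "length cs \<le> k" using len unfolding k_def by auto
  define c where "c = (\<lambda>i. if i < length cs then cs ! i else 0\<^sub>v p)"
  have cc: "c \<in> {0..<p} \<rightarrow> carrier_vec p" unfolding c_def using cs nth_mem by fastforce
  define M where "M = mat\<^sub>r p p (\<lambda>i. if i = k then 0\<^sub>v p else c i)"
  have M: "M \<in> carrier_mat p p" unfolding M_def by auto
  have "det M = 0" unfolding M_def by (rule det_row_0[OF k(1) cc])
  with det_0_iff_vec_prod_zero_field[OF M] obtain a where a: "a \<in> carrier_vec p" "a \<noteq> 0\<^sub>v p"
    and Ma: "M *\<^sub>v a = 0\<^sub>v p" by auto
  have "cs ! i \<bullet> a = 0" if i: "i < length cs" for i
  proof -
    have ip: "i < p" "i \<noteq> k" using i k by auto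
    have "(M *\<^sub>v a) $ i = row M i \<bullet> a" using M ip by simp
    also have "row M i = cs ! i" unfolding M_def using ip i cc unfolding c_def
      using subsetD[OF cs nth_mem[OF i]] by (subst row_mat_of_row_fun, auto)
    finally show ?thesis using Ma ip by simp
  qed
  thus ?thesis using a by (metis in_set_conv_nth)
qed

lemma spec_lambda:
  fixes A :: "real mat"
  assumes A: "A \<in> carrier_mat K K" and sym: "transpose_mat A = A"
  shows "\<exists>Q ds. Q \<in> carrier_mat K K \<and> transpose_mat Q * Q = 1\<^sub>m K \<and> length ds = K \<and>
    sorted (rev ds) \<and> A = Q * dg K ds * transpose_mat Q \<and> (\<forall>p. 1 \<le> p \<and> p \<le> K \<longrightarrow> lambda p A = ds ! (p - 1))"
proof -
  from spectral[OF A sym] obtain Q ds where Q: "Q \<in> carrier_mat K K" "transpose_mat Q * Q = 1\<^sub>m K"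
    "length ds = K" "sorted (rev ds)" "A = Q * dg K ds * transpose_mat Q"
    and cp: "char_poly A = (\<Prod>a\<leftarrow>ds. [:-a,1:])" by blast
  have "eigs_desc A = ds" by (rule eigs_desc_split[OF cp Q(4)])
  hence "\<forall>p. 1 \<le> p \<and> p \<le> K \<longrightarrow> lambda p A = ds ! (p - 1)" unfolding lambda_def using A by auto
  thus ?thesis using Q by blast
qed




lemma sum_sq_vec: "(a :: real vec) \<bullet> a = (\<Sum>i<dim_vec a. (a $ i)^2)"
  by (simp add: scalar_prod_def power2_eq_square lessThan_atLeast0)

lemma QtQ_vec:
  fixes Q :: "real mat"
  assumes Q: "Q \<in> carrier_mat K K" and QQ: "transpose_mat Q * Q = 1\<^sub>m K" and b: "b \<in> carrier_vec K"
  shows "transpose_mat Q *\<^sub>v (Q *\<^sub>v b) = b"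
  using Q QQ b by (simp add: assoc_mult_mat_vec[symmetric, of _ K K _ K])

lemma Qt_index:
  fixes Q :: "real mat"
  assumes Q: "Q \<in> carrier_mat K K" and x: "x \<in> carrier_vec K" and j: "j < K"
  shows "(transpose_mat Q *\<^sub>v x) $ j = col Q j \<bullet> x"
  using Q x j by simp

lemma lambda_lb:
  fixes A L :: "real mat"
  assumes A: "A \<in> carrier_mat K K" and sym: "transpose_mat A = A"
    and L: "L \<in> carrier_mat K p" and p: "1 \<le> p" "p \<le> K"
    and H: "\<And>z. z \<in> carrier_vec p \<Longrightarrow> z \<noteq> 0\<^sub>v p \<Longrightarrow>
       L *\<^sub>v z \<noteq> 0\<^sub>v K \<and> t * ((L *\<^sub>v z) \<bullet> (L *\<^sub>v z)) \<le> (L *\<^sub>v z) \<bullet> (A *\<^sub>v (L *\<^sub>v z))"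
  shows "t \<le> lambda p A"
proof (rule ccontr)
  assume "\<not> t \<le> lambda p A"
  from spec_lambda[OF A sym] obtain Q ds where Q: "Q \<in> carrier_mat K K" and QQ: "transpose_mat Q * Q = 1\<^sub>m K"
    and lds: "length ds = K" and sds: "sorted (rev ds)" and Aeq: "A = Q * dg K ds * transpose_mat Q"
    and lam: "\<forall>p. 1 \<le> p \<and> p \<le> K \<longrightarrow> lambda p A = ds ! (p - 1)" by blast
  let ?d = "ds ! (p - 1)"
  have dt: "?d < t" using lam p \<open>\<not> t \<le> lambda p A\<close> by auto
  define cs where "cs = map (\<lambda>j. transpose_mat L *\<^sub>v col Q j) [0..<p-1]"
  have csc: "set cs \<subseteq> carrier_vec p" unfolding cs_def using L Q
    by (auto intro!: mult_mat_vec_carrier[of _ p K])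
  have lcs: "length cs < p" unfolding cs_def using p by auto
  from ker_exists[OF csc lcs] obtain z where z: "z \<in> carrier_vec p" "z \<noteq> 0\<^sub>v p"
    and zc: "\<forall>c\<in>set cs. c \<bullet> z = 0" by auto
  define x where "x = L *\<^sub>v z"
  have x: "x \<in> carrier_vec K" unfolding x_def using L z by auto
  from H[OF z] have x0: "x \<noteq> 0\<^sub>v K" and Hx: "t * (x \<bullet> x) \<le> x \<bullet> (A *\<^sub>v x)" unfolding x_def by auto
  define a where "a = transpose_mat Q *\<^sub>v x"
  have a: "a \<in> carrier_vec K" unfolding a_def using Q x by auto
  have a0: "a $ j = 0" if j: "j < p - 1" for j
  proof -
    have jK: "j < K" using j p by auto
    have "a $ j = col Q j \<bullet> x" unfolding a_def using Qt_index[OF Q x jK] .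
    also have "\<dots> = (transpose_mat L *\<^sub>v col Q j) \<bullet> z"
      unfolding x_def using transpose_vec_mult_scalar[OF L z(1), of "col Q j"] Q jK by auto
    also have "\<dots> = 0" using zc j unfolding cs_def by auto
    finally show ?thesis .
  qed
  note qf = quad_form[OF Q QQ Aeq x, folded a_def]
  have "x \<bullet> (A *\<^sub>v x) = (\<Sum>i<K. ds ! i * (a $ i)^2)" using qf(3) .
  also have "\<dots> \<le> (\<Sum>i<K. ?d * (a $ i)^2)"
  proof (rule sum_mono)
    fix i assume "i \<in> {..<K}"
    hence i: "i < K" by auto
    show "ds ! i * (a $ i)^2 \<le> ?d * (a $ i)^2"
    proof (cases "i < p - 1")
      case True thus ?thesis using a0 by simp
    next
      case False
      hence "ds ! i \<le> ?d" using sorted_rev_nth_mono[OF sds, of "p - 1" i] i lds by auto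
      thus ?thesis by (rule mult_right_mono, simp)
    qed
  qed
  also have "\<dots> = ?d * (x \<bullet> x)" using qf(2) sum_sq_vec[of a] a by (simp add: sum_distrib_left)
  also have "\<dots> < t * (x \<bullet> x)" using dt real_sq_pos[OF x x0] by simp
  finally show False using Hx by simp
qed

lemma lambda_ub:
  fixes A :: "real mat"
  assumes A: "A \<in> carrier_mat K K" and sym: "transpose_mat A = A"
    and vs: "set vs \<subseteq> carrier_vec K" and lvs: "length vs < p" and p: "1 \<le> p" "p \<le> K"
    and H: "\<And>x. x \<in> carrier_vec K \<Longrightarrow> (\<forall>v\<in>set vs. v \<bullet> x = 0) \<Longrightarrow> x \<bullet> (A *\<^sub>v x) \<le> t * (x \<bullet> x)"
  shows "lambda p A \<le> t"
proof (rule ccontr)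
  assume "\<not> lambda p A \<le> t"
  from spec_lambda[OF A sym] obtain Q ds where Q: "Q \<in> carrier_mat K K" and QQ: "transpose_mat Q * Q = 1\<^sub>m K"
    and lds: "length ds = K" and sds: "sorted (rev ds)" and Aeq: "A = Q * dg K ds * transpose_mat Q"
    and lam: "\<forall>p. 1 \<le> p \<and> p \<le> K \<longrightarrow> lambda p A = ds ! (p - 1)" by blast
  let ?d = "ds ! (p - 1)"
  have dt: "t < ?d" using lam p \<open>\<not> lambda p A \<le> t\<close> by auto
  define cs where "cs = map (\<lambda>v. vec p (\<lambda>i. (transpose_mat Q *\<^sub>v v) $ i)) vs"
  have csc: "set cs \<subseteq> carrier_vec p" unfolding cs_def by auto
  have lcs: "length cs < p" unfolding cs_def using lvs by auto
  from ker_exists[OF csc lcs] obtain a where a: "a \<in> carrier_vec p" "a \<noteq> 0\<^sub>v p"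
    and ac: "\<forall>c\<in>set cs. c \<bullet> a = 0" by auto
  define b where "b = vec K (\<lambda>i. if i < p then a $ i else 0)"
  have b: "b \<in> carrier_vec K" unfolding b_def by auto
  define x where "x = Q *\<^sub>v b"
  have x: "x \<in> carrier_vec K" unfolding x_def using Q b by auto
  have Qtx: "transpose_mat Q *\<^sub>v x = b" unfolding x_def by (rule QtQ_vec[OF Q QQ b])
  have b0: "b \<noteq> 0\<^sub>v K"
  proof
    assume b0: "b = 0\<^sub>v K"
    have "a $ i = 0" if i: "i < p" for i
    proof -
      have "a $ i = b $ i" unfolding b_def using i p by simp
      also have "\<dots> = 0" using b0 i p by simp
      finally show ?thesis .
    qed
    hence "a = 0\<^sub>v p" using a by (intro eq_vecI, auto)
    thus False using a by auto
  qed
  have orthx: "\<forall>v\<in>set vs. v \<bullet> x = 0"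
  proof
    fix v assume v: "v \<in> set vs"
    hence vc: "v \<in> carrier_vec K" using vs by auto
    have "v \<bullet> x = (transpose_mat Q *\<^sub>v v) \<bullet> b"
      unfolding x_def using transpose_vec_mult_scalar[OF Q b vc] by simp
    also have "\<dots> = (\<Sum>i\<in>{0..<K}. (transpose_mat Q *\<^sub>v v) $ i * (if i < p then a $ i else 0))"
      unfolding b_def scalar_prod_def by simp
    also have "\<dots> = (\<Sum>i\<in>{0..<p}. (transpose_mat Q *\<^sub>v v) $ i * a $ i)"
      by (rule sum.mono_neutral_cong_right, insert p, auto)
    also have "\<dots> = vec p (\<lambda>i. (transpose_mat Q *\<^sub>v v) $ i) \<bullet> a"
      using a unfolding scalar_prod_def by simp
    also have "\<dots> = 0" using ac v unfolding cs_def by auto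
    finally show "v \<bullet> x = 0" .
  qed
  note qf = quad_form[OF Q QQ Aeq x, unfolded Qtx]
  have xx: "x \<bullet> x > 0" unfolding qf(2) using real_sq_pos[OF b b0] .
  have "t * (x \<bullet> x) < ?d * (x \<bullet> x)" using dt xx by simp
  also have "?d * (x \<bullet> x) = (\<Sum>i<K. ?d * (b $ i)^2)" using qf(2) sum_sq_vec[of b] b
    by (simp add: sum_distrib_left)
  also have "\<dots> \<le> (\<Sum>i<K. ds ! i * (b $ i)^2)"
  proof (rule sum_mono)
    fix i assume "i \<in> {..<K}"
    hence i: "i < K" by auto
    show "?d * (b $ i)^2 \<le> ds ! i * (b $ i)^2"
    proof (cases "i < p")
      case False thus ?thesis unfolding b_def using i by simp
    next
      case True
      hence "?d \<le> ds ! i" using sorted_rev_nth_mono[OF sds, of i "p - 1"] i lds p by auto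
      thus ?thesis by (rule mult_right_mono, simp)
    qed
  qed
  also have "\<dots> = x \<bullet> (A *\<^sub>v x)" using qf(3) by simp
  finally show False using H[OF x orthx] by simp
qed

lemma lambda_nonneg:
  fixes A :: "real mat"
  assumes A: "A \<in> carrier_mat K K" and sym: "transpose_mat A = A"
    and H: "\<And>x. x \<in> carrier_vec K \<Longrightarrow> 0 \<le> x \<bullet> (A *\<^sub>v x)"
  shows "0 \<le> lambda p A"
proof (cases "1 \<le> p \<and> p \<le> K")
  case False thus ?thesis unfolding lambda_def using A by auto
next
  case True
  from spec_lambda[OF A sym] obtain Q ds where Q: "Q \<in> carrier_mat K K" and QQ: "transpose_mat Q * Q = 1\<^sub>m K"
    and lds: "length ds = K" and sds: "sorted (rev ds)" and Aeq: "A = Q * dg K ds * transpose_mat Q"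
    and lam: "\<forall>p. 1 \<le> p \<and> p \<le> K \<longrightarrow> lambda p A = ds ! (p - 1)" by blast
  define b :: "real vec" where "b = unit_vec K (p - 1)"
  have b: "b \<in> carrier_vec K" unfolding b_def by auto
  define x where "x = Q *\<^sub>v b"
  have x: "x \<in> carrier_vec K" unfolding x_def using Q b by auto
  have Qtx: "transpose_mat Q *\<^sub>v x = b" unfolding x_def by (rule QtQ_vec[OF Q QQ b])
  note qf = quad_form[OF Q QQ Aeq x, unfolded Qtx]
  have "x \<bullet> (A *\<^sub>v x) = (\<Sum>i<K. ds ! i * (b $ i)^2)" using qf(3) .
  also have "\<dots> = (\<Sum>i<K. if i = p - 1 then ds ! (p - 1) else 0)"
    by (rule sum.cong, auto simp: b_def unit_vec_def)
  also have "\<dots> = ds ! (p - 1)" using True by auto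
  finally show ?thesis using H[OF x] lam True by auto
qed




lemma Beta_pos_real: "0 < a \<Longrightarrow> 0 < b \<Longrightarrow> 0 < Beta a (b::real)"
  by (simp add: Beta_def Gamma_real_pos)

context fixes d1 d2 :: nat assumes d12: "0 < d1" "0 < d2"
begin

lemma F_density_nonneg: "0 \<le> F_density d1 d2 t"
  unfolding F_density_def using Beta_pos_real[of "real d1 / 2" "real d2 / 2"] d12
  by (auto intro!: divide_nonneg_nonneg mult_nonneg_nonneg)

lemma F_density_nonpos: "\<not> 0 < t \<Longrightarrow> F_density d1 d2 t = 0"
  by (simp add: F_density_def)

lemma QF_nonpos: assumes "x \<le> 0" shows "QF d1 d2 x = QF d1 d2 0"
  unfolding QF_def set_lebesgue_integral_def
proof (rule Bochner_Integration.integral_cong[OF refl])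
  fix t
  show "indicator {x<..} t *\<^sub>R F_density d1 d2 t = indicator {0<..} t *\<^sub>R F_density d1 d2 t"
    using assms F_density_nonpos[of t] by (cases "0 < t", auto simp: indicator_def)
qed

lemma QF_nonneg: "0 \<le> QF d1 d2 x"
  unfolding QF_def set_lebesgue_integral_def
  by (rule integral_nonneg_AE, rule AE_I2, auto simp: indicator_def F_density_nonneg)

lemma F_density_cont: assumes a: "0 < a" shows "continuous_on {a..b} (F_density d1 d2)"
proof -
  let ?k = "real d1 / real d2"
  have c1: "continuous_on {a..b} (\<lambda>t::real. t powr (real d1 / 2 - 1))"
    by (rule continuous_on_powr, insert a, auto intro: continuous_intros)
  have c2: "continuous_on {a..b} (\<lambda>t::real. (1 + real d1 * t / real d2) powr (- (real d1 + real d2) / 2))"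
  proof (rule continuous_on_powr)
    show "continuous_on {a..b} (\<lambda>t::real. 1 + real d1 * t / real d2)" by (intro continuous_intros, insert d12, auto)
    show "\<forall>t\<in>{a..b}. 1 + real d1 * t / real d2 \<noteq> 0"
    proof
      fix t assume "t \<in> {a..b}"
      hence "0 \<le> real d1 * t / real d2" using a by auto
      thus "1 + real d1 * t / real d2 \<noteq> 0" by linarith
    qed
  qed (rule continuous_on_const)
  have "continuous_on {a..b} (\<lambda>t. (real d1 / real d2) powr (real d1 / 2) * t powr (real d1 / 2 - 1)
        * (1 + real d1 * t / real d2) powr (- (real d1 + real d2) / 2)
        / Beta (real d1 / 2) (real d2 / 2))"
    by (intro continuous_on_divide continuous_on_mult continuous_on_const c1 c2,
        insert Beta_pos_real[of "real d1 / 2" "real d2 / 2"] d12, auto)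
  thus ?thesis by (rule continuous_on_cong[THEN iffD1, rotated -1], insert a, auto simp: F_density_def)
qed

lemma QF_antimono: assumes xy: "0 < x" "x \<le> y" shows "QF d1 d2 y \<le> QF d1 d2 x"
proof (cases "set_integrable lborel {y<..} (F_density d1 d2)")
  case False
  hence "QF d1 d2 y = 0" unfolding QF_def set_lebesgue_integral_def set_integrable_def
    by (rule not_integrable_integral_eq)
  thus ?thesis using QF_nonneg by simp
next
  case True
  have "set_integrable lborel {x..y} (F_density d1 d2)" unfolding set_integrable_def
    by (rule borel_integrable_compact, auto intro: F_density_cont xy)
  hence I1: "set_integrable lborel {x<..y} (F_density d1 d2)"
    by (rule set_integrable_subset, auto)
  have un: "{x<..} = {x<..y} \<union> {y<..}" using xy by auto
  have "QF d1 d2 x = (LINT t:{x<..y}|lborel. F_density d1 d2 t) + QF d1 d2 y"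
    unfolding QF_def un by (rule set_integral_Un[OF _ I1 True], auto)
  moreover have "0 \<le> (LINT t:{x<..y}|lborel. F_density d1 d2 t)"
    unfolding set_lebesgue_integral_def
    by (rule integral_nonneg_AE, rule AE_I2, auto simp: indicator_def F_density_nonneg)
  ultimately show ?thesis by simp
qed

lemma QF_mono_scaled:
  assumes e1: "0 < e1" and e12: "e1 \<le> e2"
  shows "QF d1 d2 (e2 * g) \<le> QF d1 d2 (e1 * g)"
proof (cases "g \<le> 0")
  case True
  have "e2 * g \<le> 0" "e1 * g \<le> 0" using True e1 e12 by (auto simp: mult_nonneg_nonpos)
  thus ?thesis using QF_nonpos[of "e2 * g"] QF_nonpos[of "e1 * g"] by simp
next
  case False
  thus ?thesis using e1 e12 by (intro QF_antimono, auto intro: mult_right_mono)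
qed

end



lemma cs_vec:
  fixes v w :: "real vec"
  assumes "v \<in> carrier_vec n" "w \<in> carrier_vec n"
  shows "(v \<bullet> w)^2 \<le> (v \<bullet> v) * (w \<bullet> w)"
proof -
  have "(v \<bullet> w)^2 = (\<Sum>i\<in>{0..<n}. v $ i * w $ i)^2" using assms by (simp add: scalar_prod_def)
  also have "\<dots> \<le> (\<Sum>i\<in>{0..<n}. (v $ i)^2) * (\<Sum>i\<in>{0..<n}. (w $ i)^2)"
    by (rule Cauchy_Schwarz_ineq_sum)
  also have "\<dots> = (v \<bullet> v) * (w \<bullet> w)" using assms by (simp add: scalar_prod_def power2_eq_square)
  finally show ?thesis .
qed

lemma smult_mat_vec: "(A :: real mat) \<in> carrier_mat nr nc \<Longrightarrow> v \<in> carrier_vec nc \<Longrightarrow>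
   (a \<cdot>\<^sub>m A) *\<^sub>v v = a \<cdot>\<^sub>v (A *\<^sub>v v)"
  by (intro eq_vecI, auto)

lemma sq_le_cancel:
  fixes q r :: real
  assumes "q\<^sup>2 \<le> r * q" "0 \<le> r" shows "q \<le> r"
proof (cases "q > 0")
  case True
  hence "q * q \<le> r * q" using assms by (simp add: power2_eq_square)
  thus ?thesis using True by simp
qed (insert assms, auto)

context
  fixes c :: real and m N :: nat and P :: "real mat"
  assumes P: "P \<in> carrier_mat m N" and PP: "P * transpose_mat P = c \<cdot>\<^sub>m 1\<^sub>m m" and c: "0 < c"
begin

lemma PPt_vec: "z \<in> carrier_vec m \<Longrightarrow> P *\<^sub>v (transpose_mat P *\<^sub>v z) = c \<cdot>\<^sub>v z"
  using P PP by (simp add: assoc_mult_mat_vec[symmetric, of _ m N _ m] smult_mat_vec[of _ m m])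

lemma Pt_norm: assumes z: "z \<in> carrier_vec m"
  shows "(transpose_mat P *\<^sub>v z) \<bullet> (transpose_mat P *\<^sub>v z) = c * (z \<bullet> z)"
proof -
  have "(transpose_mat P *\<^sub>v z) \<bullet> (transpose_mat P *\<^sub>v z) = z \<bullet> (P *\<^sub>v (transpose_mat P *\<^sub>v z))"
    using transpose_vec_mult_scalar[OF P, of "transpose_mat P *\<^sub>v z" z] P z by auto
  also have "\<dots> = c * (z \<bullet> z)" unfolding PPt_vec[OF z] using z by simp
  finally show ?thesis .
qed

lemma P_norm_le: assumes y: "y \<in> carrier_vec N"
  shows "(P *\<^sub>v y) \<bullet> (P *\<^sub>v y) \<le> c * (y \<bullet> y)"
proof -
  let ?q = "(P *\<^sub>v y) \<bullet> (P *\<^sub>v y)"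
  let ?w = "transpose_mat P *\<^sub>v (P *\<^sub>v y)"
  have Py: "P *\<^sub>v y \<in> carrier_vec m" using P y by auto
  have w: "?w \<in> carrier_vec N" by (rule mult_mat_vec_carrier[OF _ Py], insert P, auto)
  have q: "?q = ?w \<bullet> y" using transpose_vec_mult_scalar[OF P y Py] by simp
  have ww: "?w \<bullet> ?w = c * ?q" by (rule Pt_norm[OF Py])
  have "?q\<^sup>2 \<le> (?w \<bullet> ?w) * (y \<bullet> y)" unfolding q by (rule cs_vec[OF w y])
  hence "?q\<^sup>2 \<le> (c * (y \<bullet> y)) * ?q" unfolding ww by (simp add: mult_ac)
  thus ?thesis by (rule sq_le_cancel, insert c real_sq_nonneg[of y], auto)
qed

end


definition Umat :: "nat \<Rightarrow> (nat \<Rightarrow> real vec) \<Rightarrow> real mat" where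
  "Umat N u = mat N N (\<lambda>(r,c). u (c+1) $ r)"

definition rsl :: "nat \<Rightarrow> (nat \<Rightarrow> real) \<Rightarrow> real list" where
  "rsl N rho2 = map (\<lambda>i. rho2 (i+1)) [0..<N]"

locale hsetup =
  fixes N K :: nat and H :: "real mat" and u :: "nat \<Rightarrow> real vec" and rho2 :: "nat \<Rightarrow> real"
  assumes H: "H \<in> carrier_mat N K"
    and u_dim: "\<And>i. 1 \<le> i \<Longrightarrow> i \<le> N \<Longrightarrow> u i \<in> carrier_vec N"
    and u_orth: "\<And>i j. 1 \<le> i \<Longrightarrow> i \<le> N \<Longrightarrow> 1 \<le> j \<Longrightarrow> j \<le> N \<Longrightarrow>
                   u i \<bullet> u j = (if i = j then 1 else 0)"
    and u_eig: "\<And>i. 1 \<le> i \<Longrightarrow> i \<le> N \<Longrightarrow> (H * transpose_mat H) *\<^sub>v u i = rho2 i \<cdot>\<^sub>v u i"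
    and rho_sorted: "\<And>i j. 1 \<le> i \<Longrightarrow> i \<le> j \<Longrightarrow> j \<le> N \<Longrightarrow> rho2 j \<le> rho2 i"
    and rho_nonneg: "rho2 N \<ge> 0"
begin

lemma U_carrier: "Umat N u \<in> carrier_mat N N" unfolding Umat_def by auto

lemma col_U: "i < N \<Longrightarrow> col (Umat N u) i = u (i+1)"
  unfolding Umat_def using u_dim[of "i+1"] by (intro eq_vecI, auto)

lemma UtU: "transpose_mat (Umat N u) * Umat N u = 1\<^sub>m N"
proof (rule eq_matI)
  fix i j assume "i < dim_row (1\<^sub>m N)" "j < dim_col (1\<^sub>m N)"
  hence i: "i < N" and j: "j < N" by auto
  have "(transpose_mat (Umat N u) * Umat N u) $$ (i, j) = col (Umat N u) i \<bullet> col (Umat N u) j"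
    using U_carrier i j by simp
  also have "\<dots> = (if i = j then 1 else 0)" unfolding col_U[OF i] col_U[OF j] using i j by (subst u_orth, auto)
  finally show "(transpose_mat (Umat N u) * Umat N u) $$ (i, j) = 1\<^sub>m N $$ (i, j)" using i j by simp
qed (insert U_carrier, auto)

lemma rho_nonneg_all: "1 \<le> i \<Longrightarrow> i \<le> N \<Longrightarrow> 0 \<le> rho2 i"
  using rho_sorted[of i N] rho_nonneg by auto

lemma G_eq: "H * transpose_mat H = Umat N u * dg N (rsl N rho2) * transpose_mat (Umat N u)"
proof -
  let ?U = "Umat N u" and ?G = "H * transpose_mat H" and ?D = "dg N (rsl N rho2)"
  have G: "?G \<in> carrier_mat N N" using H by auto
  have GU: "?G * ?U = ?U * ?D"
  proof (rule eq_matI)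
    fix i j assume "i < dim_row (?U * ?D)" "j < dim_col (?U * ?D)"
    hence i: "i < N" and j: "j < N" using U_carrier by auto
    have "(?G * ?U) $$ (i, j) = (?G *\<^sub>v col ?U j) $ i" using G U_carrier i j by (subst index_mult_mat, auto)
    also have "\<dots> = rho2 (j+1) * u (j+1) $ i" unfolding col_U[OF j] using u_eig[of "j+1"] u_dim[of "j+1"] i j by simp
    also have "\<dots> = (?U * ?D) $$ (i, j)"
    proof -
      have "(?U * ?D) $$ (i, j) = (\<Sum>k\<in>{0..<N}. ?U $$ (i, k) * (if k = j then rsl N rho2 ! j else 0))"
        using U_carrier i j by (simp add: scalar_prod_def dg_def, intro sum.cong, auto)
      also have "\<dots> = (\<Sum>k\<in>{0..<N}. if k = j then ?U $$ (i, k) * rsl N rho2 ! j else 0)"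
        by (rule sum.cong, auto)
      also have "\<dots> = ?U $$ (i, j) * rsl N rho2 ! j" using j by simp
      finally show ?thesis unfolding Umat_def rsl_def using i j by simp
    qed
    finally show "(?G * ?U) $$ (i, j) = (?U * ?D) $$ (i, j)" .
  qed (insert U_carrier G, auto)
  have UUt: "?U * transpose_mat ?U = 1\<^sub>m N" by (rule orth_right[OF U_carrier UtU])
  have "?G = ?G * (?U * transpose_mat ?U)" unfolding UUt using G by (simp add: right_mult_one_mat)
  also have "\<dots> = (?G * ?U) * transpose_mat ?U" using G U_carrier by (simp add: assoc_mult_mat[of _ N N _ N _ N])
  also have "\<dots> = ?U * ?D * transpose_mat ?U" unfolding GU ..
  finally show ?thesis .
qed

lemma Ut_idx: "y \<in> carrier_vec N \<Longrightarrow> i < N \<Longrightarrow> (transpose_mat (Umat N u) *\<^sub>v y) $ i = u (i+1) \<bullet> y"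
  using Qt_index[OF U_carrier, of y i] col_U by simp

lemma y_norm: assumes y: "y \<in> carrier_vec N" shows "y \<bullet> y = (\<Sum>i<N. (u (i+1) \<bullet> y)^2)"
proof -
  have "y \<bullet> y = (transpose_mat (Umat N u) *\<^sub>v y) \<bullet> (transpose_mat (Umat N u) *\<^sub>v y)"
    by (rule quad_form(2)[OF U_carrier UtU G_eq y])
  also have "\<dots> = (\<Sum>i<N. ((transpose_mat (Umat N u) *\<^sub>v y) $ i)^2)"
    unfolding sum_sq_vec using U_carrier by simp
  also have "\<dots> = (\<Sum>i<N. (u (i+1) \<bullet> y)^2)" by (rule sum.cong, insert Ut_idx[OF y], auto)
  finally show ?thesis .
qed

lemma y_G: assumes y: "y \<in> carrier_vec N"
  shows "y \<bullet> ((H * transpose_mat H) *\<^sub>v y) = (\<Sum>i<N. rho2 (i+1) * (u (i+1) \<bullet> y)^2)"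
proof -
  have "y \<bullet> ((H * transpose_mat H) *\<^sub>v y) = (\<Sum>i<N. rsl N rho2 ! i * ((transpose_mat (Umat N u) *\<^sub>v y) $ i)^2)"
    by (rule quad_form(3)[OF U_carrier UtU G_eq y])
  also have "\<dots> = (\<Sum>i<N. rho2 (i+1) * (u (i+1) \<bullet> y)^2)"
    by (rule sum.cong, insert Ut_idx[OF y], auto simp: rsl_def)
  finally show ?thesis .
qed

lemma G_upper:
  assumes y: "y \<in> carrier_vec N" and k: "1 \<le> k" "k \<le> N"
    and orth: "\<And>i. 1 \<le> i \<Longrightarrow> i < k \<Longrightarrow> u i \<bullet> y = 0"
  shows "y \<bullet> ((H * transpose_mat H) *\<^sub>v y) \<le> rho2 k * (y \<bullet> y)"
proof -
  have "y \<bullet> ((H * transpose_mat H) *\<^sub>v y) = (\<Sum>i<N. rho2 (i+1) * (u (i+1) \<bullet> y)^2)" by (rule y_G[OF y])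
  also have "\<dots> \<le> (\<Sum>i<N. rho2 k * (u (i+1) \<bullet> y)^2)"
  proof (rule sum_mono)
    fix i assume "i \<in> {..<N}"
    hence i: "i < N" by auto
    show "rho2 (i+1) * (u (i+1) \<bullet> y)^2 \<le> rho2 k * (u (i+1) \<bullet> y)^2"
    proof (cases "i + 1 < k")
      case True thus ?thesis using orth[of "i+1"] by simp
    next
      case False thus ?thesis using rho_sorted[of k "i+1"] k i by (intro mult_right_mono, auto)
    qed
  qed
  also have "\<dots> = rho2 k * (y \<bullet> y)" unfolding y_norm[OF y] by (simp add: sum_distrib_left)
  finally show ?thesis .
qed

lemma G_lower:
  assumes y: "y \<in> carrier_vec N" and k: "1 \<le> k" "k \<le> N"
    and orth: "\<And>i. k < i \<Longrightarrow> i \<le> N \<Longrightarrow> u i \<bullet> y = 0"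
  shows "rho2 k * (y \<bullet> y) \<le> y \<bullet> ((H * transpose_mat H) *\<^sub>v y)"
proof -
  have "rho2 k * (y \<bullet> y) = (\<Sum>i<N. rho2 k * (u (i+1) \<bullet> y)^2)" unfolding y_norm[OF y] by (simp add: sum_distrib_left)
  also have "\<dots> \<le> (\<Sum>i<N. rho2 (i+1) * (u (i+1) \<bullet> y)^2)"
  proof (rule sum_mono)
    fix i assume "i \<in> {..<N}"
    hence i: "i < N" by auto
    show "rho2 k * (u (i+1) \<bullet> y)^2 \<le> rho2 (i+1) * (u (i+1) \<bullet> y)^2"
    proof (cases "k < i + 1")
      case True thus ?thesis using orth[of "i+1"] i by simp
    next
      case False thus ?thesis using rho_sorted[of "i+1" k] k i by (intro mult_right_mono, auto)
    qed
  qed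
  also have "\<dots> = y \<bullet> ((H * transpose_mat H) *\<^sub>v y)" by (rule y_G[OF y, symmetric])
  finally show ?thesis .
qed

lemma Ht_norm: assumes y: "y \<in> carrier_vec N"
  shows "(transpose_mat H *\<^sub>v y) \<bullet> (transpose_mat H *\<^sub>v y) = y \<bullet> ((H * transpose_mat H) *\<^sub>v y)"
proof -
  have "(transpose_mat H *\<^sub>v y) \<bullet> (transpose_mat H *\<^sub>v y) = y \<bullet> (H *\<^sub>v (transpose_mat H *\<^sub>v y))"
    using transpose_vec_mult_scalar[OF H, of "transpose_mat H *\<^sub>v y" y] H y by auto
  also have "H *\<^sub>v (transpose_mat H *\<^sub>v y) = (H * transpose_mat H) *\<^sub>v y"
    using H y by (simp add: assoc_mult_mat_vec[of _ N K _ N])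
  finally show ?thesis .
qed

lemma Hx_bound:
  assumes x: "x \<in> carrier_vec K" and k: "1 \<le> k" "k \<le> N"
    and orth: "\<And>i. 1 \<le> i \<Longrightarrow> i < k \<Longrightarrow> (transpose_mat H *\<^sub>v u i) \<bullet> x = 0"
  shows "(H *\<^sub>v x) \<bullet> (H *\<^sub>v x) \<le> rho2 k * (x \<bullet> x)"
proof -
  let ?y = "H *\<^sub>v x"
  have y: "?y \<in> carrier_vec N" using H x by auto
  have uy: "u i \<bullet> ?y = 0" if "1 \<le> i" "i < k" for i
    using orth[OF that] transpose_vec_mult_scalar[OF H x, of "u i"] u_dim[of i] that k by auto
  have Gy: "?y \<bullet> ((H * transpose_mat H) *\<^sub>v ?y) \<le> rho2 k * (?y \<bullet> ?y)"
    by (rule G_upper[OF y k uy])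
  have yy: "?y \<bullet> ?y = (transpose_mat H *\<^sub>v ?y) \<bullet> x"
    using transpose_vec_mult_scalar[OF H x y] by simp
  have "(?y \<bullet> ?y)^2 \<le> ((transpose_mat H *\<^sub>v ?y) \<bullet> (transpose_mat H *\<^sub>v ?y)) * (x \<bullet> x)"
  proof -
    have c1: "transpose_mat H *\<^sub>v ?y \<in> carrier_vec K" using H by (intro mult_mat_vec_carrier[OF _ y], auto)
    show ?thesis unfolding yy by (rule cs_vec[OF c1 x])
  qed
  also have "\<dots> \<le> (rho2 k * (?y \<bullet> ?y)) * (x \<bullet> x)"
    unfolding Ht_norm[OF y] by (rule mult_right_mono[OF Gy real_sq_nonneg])
  finally have "(?y \<bullet> ?y)^2 \<le> (rho2 k * (x \<bullet> x)) * (?y \<bullet> ?y)" by (simp add: mult_ac)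
  thus ?thesis by (rule sq_le_cancel, insert rho_nonneg_all[of k] k real_sq_nonneg[of x], auto)
qed


context
  fixes c :: real and m :: nat and P :: "real mat"
  assumes P: "P \<in> carrier_mat m N" and PP: "P * transpose_mat P = c \<cdot>\<^sub>m 1\<^sub>m m" and c: "0 < c"
begin

lemma AP_alt: "transpose_mat H * transpose_mat P * P * H = transpose_mat (P * H) * (P * H)"
proof -
  have "transpose_mat (P * H) = transpose_mat H * transpose_mat P" by (rule transpose_mult[OF P H])
  moreover have "transpose_mat H * transpose_mat P * P * H = (transpose_mat H * transpose_mat P) * (P * H)"
    by (rule assoc_mult_mat[of _ K m _ N _ K], insert P H, auto)
  ultimately show ?thesis by simp
qed

lemma AP_carrier: "transpose_mat H * transpose_mat P * P * H \<in> carrier_mat K K"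
  using P H by auto

lemma AP_sym: "transpose_mat (transpose_mat H * transpose_mat P * P * H) = transpose_mat H * transpose_mat P * P * H"
  unfolding AP_alt using P H by (subst transpose_mult[of _ K m _ K], auto)

lemma AP_quad: assumes x: "x \<in> carrier_vec K"
  shows "x \<bullet> ((transpose_mat H * transpose_mat P * P * H) *\<^sub>v x) = (P *\<^sub>v (H *\<^sub>v x)) \<bullet> (P *\<^sub>v (H *\<^sub>v x))"
proof -
  have PH: "P * H \<in> carrier_mat m K" using P H by auto
  have "(transpose_mat (P * H) * (P * H)) *\<^sub>v x = transpose_mat (P * H) *\<^sub>v ((P * H) *\<^sub>v x)"
    using PH x by (simp add: assoc_mult_mat_vec[of _ K m _ K])
  moreover have "(P * H) *\<^sub>v x = P *\<^sub>v (H *\<^sub>v x)" using P H x by (simp add: assoc_mult_mat_vec[of _ m N _ K])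
  moreover have "x \<bullet> (transpose_mat (P * H) *\<^sub>v ((P * H) *\<^sub>v x)) = ((P * H) *\<^sub>v x) \<bullet> ((P * H) *\<^sub>v x)"
    using transpose_vec_mult_scalar[OF PH x, of "(P * H) *\<^sub>v x"] PH x
    by (auto simp: comm_scalar_prod[of _ K])
  ultimately show ?thesis unfolding AP_alt by simp
qed

lemma AP_nonneg: "0 \<le> lambda p (transpose_mat H * transpose_mat P * P * H)"
  by (rule lambda_nonneg[OF AP_carrier AP_sym], unfold AP_quad, rule real_sq_nonneg)

lemma UBgen: assumes k: "1 \<le> k" "k \<le> K" "k \<le> N"
  shows "lambda k (transpose_mat H * transpose_mat P * P * H) \<le> c * rho2 k"
proof (rule lambda_ub[OF AP_carrier AP_sym, of "map (\<lambda>i. transpose_mat H *\<^sub>v u i) [1..<k]"])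
  show "set (map (\<lambda>i. transpose_mat H *\<^sub>v u i) [1..<k]) \<subseteq> carrier_vec K"
    using H u_dim k by (auto intro!: mult_mat_vec_carrier[of _ K N])
  show "length (map (\<lambda>i. transpose_mat H *\<^sub>v u i) [1..<k]) < k" using k by simp
  fix x assume x: "x \<in> carrier_vec K" and orth: "\<forall>v\<in>set (map (\<lambda>i. transpose_mat H *\<^sub>v u i) [1..<k]). v \<bullet> x = 0"
  have Hx: "H *\<^sub>v x \<in> carrier_vec N" using H x by auto
  have "x \<bullet> ((transpose_mat H * transpose_mat P * P * H) *\<^sub>v x) = (P *\<^sub>v (H *\<^sub>v x)) \<bullet> (P *\<^sub>v (H *\<^sub>v x))"
    by (rule AP_quad[OF x])
  also have "\<dots> \<le> c * ((H *\<^sub>v x) \<bullet> (H *\<^sub>v x))" by (rule P_norm_le[OF P PP c Hx])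
  also have "\<dots> \<le> c * (rho2 k * (x \<bullet> x))"
    by (rule mult_left_mono[OF Hx_bound[OF x k(1) k(3)]], insert orth c, auto)
  finally show "x \<bullet> ((transpose_mat H * transpose_mat P * P * H) *\<^sub>v x) \<le> c * rho2 k * (x \<bullet> x)" by simp
qed (insert k, auto)


lemma LBgen:
  assumes E: "E \<in> carrier_mat m p" and p: "1 \<le> p" "p \<le> K" and r: "0 < r"
    and cond: "\<And>z. z \<in> carrier_vec p \<Longrightarrow> z \<noteq> 0\<^sub>v p \<Longrightarrow> E *\<^sub>v z \<noteq> 0\<^sub>v m \<and>
        r * ((transpose_mat P *\<^sub>v (E *\<^sub>v z)) \<bullet> (transpose_mat P *\<^sub>v (E *\<^sub>v z))) \<le>
        (transpose_mat P *\<^sub>v (E *\<^sub>v z)) \<bullet> ((H * transpose_mat H) *\<^sub>v (transpose_mat P *\<^sub>v (E *\<^sub>v z)))"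
  shows "c * r \<le> lambda p (transpose_mat H * transpose_mat P * P * H)"
proof (rule lambda_lb[OF AP_carrier AP_sym _ p, of "transpose_mat H * (transpose_mat P * E)"])
  show L: "transpose_mat H * (transpose_mat P * E) \<in> carrier_mat K p" using H P E by auto
  fix z :: "real vec" assume z: "z \<in> carrier_vec p" "z \<noteq> 0\<^sub>v p"
  let ?G = "H * transpose_mat H"
  define w where "w = E *\<^sub>v z"
  define y where "y = transpose_mat P *\<^sub>v w"
  define x where "x = transpose_mat H *\<^sub>v y"
  have w: "w \<in> carrier_vec m" unfolding w_def using E z by auto
  have y: "y \<in> carrier_vec N" unfolding y_def using P w by (intro mult_mat_vec_carrier[OF _ w], auto)
  have x: "x \<in> carrier_vec K" unfolding x_def using H y by (intro mult_mat_vec_carrier[OF _ y], auto)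
  from cond[OF z, folded w_def, folded y_def] have w0: "w \<noteq> 0\<^sub>v m" and ry: "r * (y \<bullet> y) \<le> y \<bullet> (?G *\<^sub>v y)" by auto
  have Lz: "(transpose_mat H * (transpose_mat P * E)) *\<^sub>v z = x"
    unfolding x_def y_def w_def using H P E z
    by (simp add: assoc_mult_mat_vec[of _ K N _ p] assoc_mult_mat_vec[of _ N m _ p])
  have ww: "w \<bullet> w > 0" using real_sq_pos[OF w w0] .
  have yy: "y \<bullet> y = c * (w \<bullet> w)" unfolding y_def by (rule Pt_norm[OF P PP c w])
  define g where "g = y \<bullet> (?G *\<^sub>v y)"
  have g: "0 < g" unfolding g_def using ry yy ww c r by (smt (verit) mult_pos_pos)
  have xx: "x \<bullet> x = g" unfolding x_def g_def by (rule Ht_norm[OF y])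
  have x0: "x \<noteq> 0\<^sub>v K" using xx g x by auto
  have Gy: "?G *\<^sub>v y \<in> carrier_vec N" using H y by (intro mult_mat_vec_carrier[OF _ y], auto)
  have Hx: "H *\<^sub>v x = ?G *\<^sub>v y" unfolding x_def using H y by (simp add: assoc_mult_mat_vec[of _ N K _ N])
  define v where "v = P *\<^sub>v (?G *\<^sub>v y)"
  have v: "v \<in> carrier_vec m" unfolding v_def using P Gy by auto
  have wv: "w \<bullet> v = g" unfolding v_def g_def
    using transpose_vec_mult_scalar[OF P Gy w] unfolding y_def[symmetric] by simp
  have cs: "g\<^sup>2 \<le> (w \<bullet> w) * (v \<bullet> v)" using cs_vec[OF w v] unfolding wv .
  have "(w \<bullet> w) * (c * r * g) = g * (r * (c * (w \<bullet> w)))" by (simp add: mult_ac)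
  also have "\<dots> \<le> g * g" unfolding yy[symmetric] using ry g unfolding g_def by (intro mult_left_mono, auto)
  also have "\<dots> \<le> (w \<bullet> w) * (v \<bullet> v)" using cs by (simp add: power2_eq_square)
  finally have "c * r * g \<le> v \<bullet> v" using ww by simp
  moreover have "x \<bullet> ((transpose_mat H * transpose_mat P * P * H) *\<^sub>v x) = v \<bullet> v"
    unfolding AP_quad[OF x] Hx v_def ..
  ultimately show "(transpose_mat H * (transpose_mat P * E)) *\<^sub>v z \<noteq> 0\<^sub>v K \<and>
    c * r * (((transpose_mat H * (transpose_mat P * E)) *\<^sub>v z) \<bullet> ((transpose_mat H * (transpose_mat P * E)) *\<^sub>v z))
     \<le> ((transpose_mat H * (transpose_mat P * E)) *\<^sub>v z) \<bullet> ((transpose_mat H * transpose_mat P * P * H) *\<^sub>v ((transpose_mat H * (transpose_mat P * E)) *\<^sub>v z))"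
    unfolding Lz xx using x0 by simp
qed

end

end




lemma transpose_smult: "transpose_mat (k \<cdot>\<^sub>m (A :: real mat)) = k \<cdot>\<^sub>m transpose_mat A"
  by (rule eq_matI, auto)

lemma smult_smult_mat': "a \<cdot>\<^sub>m (b \<cdot>\<^sub>m A) = (a * b) \<cdot>\<^sub>m (A :: real mat)"
  by (rule eq_matI, auto)

lemma row_append_rows:
  assumes A: "A \<in> carrier_mat m1 n" and B: "B \<in> carrier_mat m2 n" and i: "i < m1 + m2"
  shows "row (A @\<^sub>r B) i = (if i < m1 then row A i else row B (i - m1))"
  using A B i unfolding append_rows_def by (intro eq_vecI, auto)

lemma append_rows_orth:
  fixes A B :: "real mat"
  assumes A: "A \<in> carrier_mat m1 n" and B: "B \<in> carrier_mat m2 n"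
  shows "(A @\<^sub>r B) * transpose_mat (A @\<^sub>r B) = c \<cdot>\<^sub>m 1\<^sub>m (m1 + m2) \<longleftrightarrow>
    A * transpose_mat A = c \<cdot>\<^sub>m 1\<^sub>m m1 \<and> B * transpose_mat B = c \<cdot>\<^sub>m 1\<^sub>m m2 \<and> A * transpose_mat B = 0\<^sub>m m1 m2"
    (is "?L \<longleftrightarrow> ?R")
proof -
  have AB: "A @\<^sub>r B \<in> carrier_mat (m1 + m2) n" using A B by auto
  have e: "((A @\<^sub>r B) * transpose_mat (A @\<^sub>r B)) $$ (i, j) =
    (if i < m1 then row A i else row B (i - m1)) \<bullet> (if j < m1 then row A j else row B (j - m1))"
    if "i < m1 + m2" "j < m1 + m2" for i j
    using that AB row_append_rows[OF A B, of i] row_append_rows[OF A B, of j] by simp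
  show ?thesis
  proof
    assume L: ?L
    have Le: "(if i < m1 then row A i else row B (i - m1)) \<bullet> (if j < m1 then row A j else row B (j - m1))
       = (if i = j then c else 0)" if "i < m1 + m2" "j < m1 + m2" for i j
      using e[OF that] arg_cong[OF L, of "\<lambda>M. M $$ (i, j)"] that
      by (cases "i < m1"; cases "j < m1"; cases "i = j"; simp)
    show ?R
    proof (intro conjI)
      show "A * transpose_mat A = c \<cdot>\<^sub>m 1\<^sub>m m1"
      proof (rule eq_matI)
        fix i j assume "i < dim_row (c \<cdot>\<^sub>m 1\<^sub>m m1)" "j < dim_col (c \<cdot>\<^sub>m 1\<^sub>m m1)"
        hence ij: "i < m1" "j < m1" by auto
        from Le[of i j] ij show "(A * transpose_mat A) $$ (i, j) = (c \<cdot>\<^sub>m 1\<^sub>m m1) $$ (i, j)"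
          using A by auto
      qed (insert A, auto)
      show "B * transpose_mat B = c \<cdot>\<^sub>m 1\<^sub>m m2"
      proof (rule eq_matI)
        fix i j assume "i < dim_row (c \<cdot>\<^sub>m 1\<^sub>m m2)" "j < dim_col (c \<cdot>\<^sub>m 1\<^sub>m m2)"
        hence ij: "i < m2" "j < m2" by auto
        from Le[of "i + m1" "j + m1"] ij show "(B * transpose_mat B) $$ (i, j) = (c \<cdot>\<^sub>m 1\<^sub>m m2) $$ (i, j)"
          using B by auto
      qed (insert B, auto)
      show "A * transpose_mat B = 0\<^sub>m m1 m2"
      proof (rule eq_matI)
        fix i j assume "i < dim_row (0\<^sub>m m1 m2 :: real mat)" "j < dim_col (0\<^sub>m m1 m2 :: real mat)"
        hence ij: "i < m1" "j < m2" by auto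
        from Le[of i "j + m1"] ij show "(A * transpose_mat B) $$ (i, j) = 0\<^sub>m m1 m2 $$ (i, j)"
          using A B by auto
      qed (insert A B, auto)
    qed
  next
    assume R: ?R
    hence R1: "A * transpose_mat A = c \<cdot>\<^sub>m 1\<^sub>m m1" and R2: "B * transpose_mat B = c \<cdot>\<^sub>m 1\<^sub>m m2"
      and R3: "A * transpose_mat B = 0\<^sub>m m1 m2" by auto
    show ?L
    proof (rule eq_matI)
      fix i j assume "i < dim_row (c \<cdot>\<^sub>m 1\<^sub>m (m1 + m2))" "j < dim_col (c \<cdot>\<^sub>m 1\<^sub>m (m1 + m2))"
      hence ij: "i < m1 + m2" "j < m1 + m2" by auto
      have aa: "row A i \<bullet> row A j = (if i = j then c else 0)" if "i < m1" "j < m1" for i j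
        using arg_cong[OF R1, of "\<lambda>M. M $$ (i, j)"] that A by simp
      have bb: "row B i \<bullet> row B j = (if i = j then c else 0)" if "i < m2" "j < m2" for i j
        using arg_cong[OF R2, of "\<lambda>M. M $$ (i, j)"] that B by simp
      have ab: "row A i \<bullet> row B j = 0" if "i < m1" "j < m2" for i j
        using arg_cong[OF R3, of "\<lambda>M. M $$ (i, j)"] that A B by simp
      have ba: "row B i \<bullet> row A j = 0" if "i < m2" "j < m1" for i j
        using ab[of j i] that A B comm_scalar_prod[of "row B i" n "row A j"] by auto
      show "((A @\<^sub>r B) * transpose_mat (A @\<^sub>r B)) $$ (i, j) = (c \<cdot>\<^sub>m 1\<^sub>m (m1 + m2)) $$ (i, j)"
        unfolding e[OF ij] using ij aa bb ab ba by auto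
    qed (insert AB, auto)
  qed
qed


lemma sum_reindex_shift:
  fixes a m N :: nat and g :: "nat \<Rightarrow> real"
  assumes a: "1 \<le> a" "a + m \<le> N + 1"
  shows "(\<Sum>j<m. g (a + j)) = (\<Sum>i<N. if a \<le> i + 1 \<and> i + 1 < a + m then g (i + 1) else (0::real))"
proof -
  have "(\<Sum>i<N. if a \<le> i + 1 \<and> i + 1 < a + m then g (i + 1) else 0) = sum (\<lambda>i. g (i + 1)) ({..<N} \<inter> {i. a \<le> i + 1 \<and> i + 1 < a + m})"
  proof -
    have "(\<Sum>i<N. if a \<le> i + 1 \<and> i + 1 < a + m then g (i + 1) else 0)
      = (\<Sum>i<N. if i \<in> {i. a \<le> i + 1 \<and> i + 1 < a + m} then g (i + 1) else 0)" by simp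
    also have "\<dots> = sum (\<lambda>i. g (i + 1)) ({..<N} \<inter> {i. a \<le> i + 1 \<and> i + 1 < a + m})"
      using sum.inter_restrict[OF finite_lessThan[of N], of "\<lambda>i. g (i + 1)" "{i. a \<le> i + 1 \<and> i + 1 < a + m}"]
      by (simp only:)
    finally show ?thesis .
  qed
  also have "{..<N} \<inter> {i. a \<le> i + 1 \<and> i + 1 < a + m} = {0 + (a - 1)..<m + (a - 1)}" using a by auto
  also have "sum (\<lambda>i. g (i + 1)) {0 + (a - 1)..<m + (a - 1)} = sum (\<lambda>j. g (j + (a - 1) + 1)) {0..<m}"
    by (rule sum.shift_bounds_nat_ivl)
  also have "\<dots> = (\<Sum>j<m. g (a + j))" using a by (intro sum.cong, auto simp: add.commute)
  finally show ?thesis by simp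
qed

definition Popt :: "real \<Rightarrow> real mat \<Rightarrow> real mat \<Rightarrow> real mat" where
  "Popt Mt T R = (1 / sqrt Mt) \<cdot>\<^sub>m (T * R)"

context hsetup
begin

context
  fixes a m :: nat and T :: "real mat" and Mt :: real
  assumes a1: "1 \<le> a" and am: "a + m \<le> N + 1" and T: "T \<in> carrier_mat m m"
    and TT: "T * transpose_mat T = 1\<^sub>m m" and Mt: "0 < Mt"
begin

abbreviation "R \<equiv> rows_of m N a u"

lemma R_carrier: "R \<in> carrier_mat m N" unfolding rows_of_def by auto

lemma R_row: "i < m \<Longrightarrow> row R i = u (a + i)"
  unfolding rows_of_def using u_dim[of "a+i"] a1 am by (intro eq_vecI, auto)

lemma R_mv: "y \<in> carrier_vec N \<Longrightarrow> j < m \<Longrightarrow> (R *\<^sub>v y) $ j = u (a + j) \<bullet> y"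
  using R_carrier R_row by simp

lemma RRt: "R * transpose_mat R = 1\<^sub>m m"
proof (rule eq_matI)
  fix i j assume "i < dim_row (1\<^sub>m m)" "j < dim_col (1\<^sub>m m)"
  hence ij: "i < m" "j < m" by auto
  have "(R * transpose_mat R) $$ (i, j) = u (a + i) \<bullet> u (a + j)" using R_carrier R_row ij by simp
  also have "\<dots> = 1\<^sub>m m $$ (i, j)" using ij a1 am by (subst u_orth, auto)
  finally show "(R * transpose_mat R) $$ (i, j) = 1\<^sub>m m $$ (i, j)" .
qed (insert R_carrier, auto)

lemma TtT: "transpose_mat T * T = 1\<^sub>m m"
  using orth_right[of "transpose_mat T" m] T TT by auto

lemma Popt_carrier: "Popt Mt T R \<in> carrier_mat m N" unfolding Popt_def using T R_carrier by auto

lemma Popt_tr: "transpose_mat (Popt Mt T R) = (1 / sqrt Mt) \<cdot>\<^sub>m (transpose_mat R * transpose_mat T)"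
  unfolding Popt_def transpose_smult using transpose_mult[OF T R_carrier] by simp

lemma PoptPt: "Popt Mt T R * transpose_mat (Popt Mt T R) = (1 / Mt) \<cdot>\<^sub>m 1\<^sub>m m"
proof -
  have "T * R * (transpose_mat R * transpose_mat T) = T * (R * (transpose_mat R * transpose_mat T))"
    by (rule assoc_mult_mat[of _ m m _ N _ m], insert T R_carrier, auto)
  also have "R * (transpose_mat R * transpose_mat T) = (R * transpose_mat R) * transpose_mat T"
    by (rule assoc_mult_mat[symmetric, of _ m N _ m _ m], insert T R_carrier, auto)
  also have "\<dots> = transpose_mat T" unfolding RRt using T by simp
  also have "T * transpose_mat T = 1\<^sub>m m" by (rule TT)
  finally have e: "T * R * (transpose_mat R * transpose_mat T) = 1\<^sub>m m" .
  have "Popt Mt T R * transpose_mat (Popt Mt T R) =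
     (1 / sqrt Mt * (1 / sqrt Mt)) \<cdot>\<^sub>m (T * R * (transpose_mat R * transpose_mat T))"
    unfolding Popt_tr unfolding Popt_def using T R_carrier
    by (simp add: mult_smult_assoc_mat[of _ m N _ m] mult_smult_distrib[of _ m N _ m] smult_smult_mat' del: real_sqrt_mult_self)
  also have "1 / sqrt Mt * (1 / sqrt Mt) = 1 / Mt" using Mt by (simp add: real_sqrt_mult[symmetric])
  finally show ?thesis unfolding e .
qed

lemma T_norm: "v \<in> carrier_vec m \<Longrightarrow> (T *\<^sub>v v) \<bullet> (T *\<^sub>v v) = v \<bullet> v"
  using transpose_vec_mult_scalar[OF T, of v "T *\<^sub>v v"] T QtQ_vec[OF T TtT, of v] by auto

lemma Popt_norm: assumes y: "y \<in> carrier_vec N"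
  shows "(Popt Mt T R *\<^sub>v y) \<bullet> (Popt Mt T R *\<^sub>v y) = (1 / Mt) * (\<Sum>j<m. (u (a + j) \<bullet> y)^2)"
proof -
  have Ry: "R *\<^sub>v y \<in> carrier_vec m" using R_carrier y by auto
  have "Popt Mt T R *\<^sub>v y = (1 / sqrt Mt) \<cdot>\<^sub>v (T *\<^sub>v (R *\<^sub>v y))"
    unfolding Popt_def using T R_carrier y
    by (simp add: smult_mat_vec[of _ m N] assoc_mult_mat_vec[of _ m m _ N])
  hence "(Popt Mt T R *\<^sub>v y) \<bullet> (Popt Mt T R *\<^sub>v y) = (1 / sqrt Mt * (1 / sqrt Mt)) * ((R *\<^sub>v y) \<bullet> (R *\<^sub>v y))"
    using T_norm[OF Ry] T Ry by simp
  also have "1 / sqrt Mt * (1 / sqrt Mt) = 1 / Mt" using Mt by (simp add: real_sqrt_mult[symmetric])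
  also have "(R *\<^sub>v y) \<bullet> (R *\<^sub>v y) = (\<Sum>j<m. (u (a + j) \<bullet> y)^2)"
    unfolding sum_sq_vec using R_carrier R_mv[OF y] by simp
  finally show ?thesis .
qed


lemma UBopt:
  assumes p: "1 \<le> p" "p \<le> K" "p \<le> m"
  shows "lambda p (transpose_mat H * transpose_mat (Popt Mt T R) * Popt Mt T R * H) \<le> (1 / Mt) * rho2 (a + p - 1)"
proof -
  have c: "0 < 1 / Mt" using Mt by simp
  note Pc = Popt_carrier and PP = PoptPt
  let ?rho = "rho2 (a + p - 1)"
  have k: "1 \<le> a + p - 1" "a + p - 1 \<le> N" using a1 am p by auto
  show ?thesis
  proof (rule lambda_ub[OF AP_carrier[OF Pc PP c] AP_sym[OF Pc PP c], of "map (\<lambda>i. transpose_mat H *\<^sub>v u i) [a..<a+p-1]"])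
    show "set (map (\<lambda>i. transpose_mat H *\<^sub>v u i) [a..<a+p-1]) \<subseteq> carrier_vec K"
      using H a1 am p by (auto intro!: mult_mat_vec_carrier[of _ K N] u_dim)
    show "length (map (\<lambda>i. transpose_mat H *\<^sub>v u i) [a..<a+p-1]) < p" using p a1 by simp
    fix x assume x: "x \<in> carrier_vec K" and orth: "\<forall>v\<in>set (map (\<lambda>i. transpose_mat H *\<^sub>v u i) [a..<a+p-1]). v \<bullet> x = 0"
    define y where "y = H *\<^sub>v x"
    have y: "y \<in> carrier_vec N" unfolding y_def using H x by auto
    define f where "f = (\<lambda>i. u i \<bullet> y)"
    have f0: "f i = 0" if "a \<le> i" "i < a + p - 1" for i
    proof -
      have "(transpose_mat H *\<^sub>v u i) \<bullet> x = 0" using orth that by auto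
      moreover have "(transpose_mat H *\<^sub>v u i) \<bullet> x = u i \<bullet> y"
        unfolding y_def by (rule transpose_vec_mult_scalar[OF H x], insert u_dim[of i] that a1 am p, auto)
      ultimately show ?thesis unfolding f_def by simp
    qed
    define S where "S = (\<Sum>j<m. (f (a + j))^2)"
    have xAx: "x \<bullet> ((transpose_mat H * transpose_mat (Popt Mt T R) * Popt Mt T R * H) *\<^sub>v x) = (1 / Mt) * S"
      unfolding AP_quad[OF Pc PP c x] y_def[symmetric] Popt_norm[OF y] S_def f_def ..
    let ?P = "\<lambda>i. a + p - 1 \<le> i + 1 \<and> i + 1 < a + m"
    define b where "b = vec N (\<lambda>i. if ?P i then f (i + 1) else 0)"
    have b: "b \<in> carrier_vec N" unfolding b_def by auto
    have bb: "b \<bullet> b = S"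
    proof -
      have "S = (\<Sum>i<N. if a \<le> i + 1 \<and> i + 1 < a + m then (f (i + 1))^2 else 0)"
        unfolding S_def by (rule sum_reindex_shift[OF a1 am])
      also have "\<dots> = (\<Sum>i<N. (b $ i)^2)"
        by (rule sum.cong, insert f0 p, auto simp: b_def)
      finally show ?thesis unfolding sum_sq_vec using b by simp
    qed
    define w where "w = Umat N u *\<^sub>v b"
    have w: "w \<in> carrier_vec N" unfolding w_def using U_carrier b by auto
    have Utw: "transpose_mat (Umat N u) *\<^sub>v w = b" unfolding w_def by (rule QtQ_vec[OF U_carrier UtU b])
    have wy: "w \<bullet> y = S"
    proof -
      have "w \<bullet> y = (transpose_mat (Umat N u) *\<^sub>v y) \<bullet> b"
        unfolding w_def using transpose_vec_mult_scalar[OF U_carrier b y] comm_scalar_prod[of _ N] U_carrier b y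
        by (metis mult_mat_vec_carrier)
      also have "\<dots> = (\<Sum>i\<in>{0..<N}. f (i + 1) * b $ i)"
        unfolding scalar_prod_def using b Ut_idx[OF y] U_carrier by (simp add: f_def)
      also have "\<dots> = b \<bullet> b" unfolding scalar_prod_def using b
        by (intro sum.cong, auto simp: b_def)
      finally show ?thesis using bb by simp
    qed
    have wGw: "w \<bullet> ((H * transpose_mat H) *\<^sub>v w) \<le> ?rho * S"
    proof -
      have "w \<bullet> ((H * transpose_mat H) *\<^sub>v w) = (\<Sum>i<N. rsl N rho2 ! i * (b $ i)^2)"
        using quad_form(3)[OF U_carrier UtU G_eq w] unfolding Utw .
      also have "\<dots> \<le> (\<Sum>i<N. ?rho * (b $ i)^2)"
      proof (rule sum_mono)
        fix i assume "i \<in> {..<N}"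
        hence i: "i < N" by auto
        show "rsl N rho2 ! i * (b $ i)^2 \<le> ?rho * (b $ i)^2"
        proof (cases "?P i")
          case True
          hence "rho2 (i + 1) \<le> ?rho" using rho_sorted[of "a + p - 1" "i + 1"] k i by auto
          thus ?thesis using i by (auto simp: rsl_def intro!: mult_right_mono)
        next
          case False thus ?thesis using i by (auto simp: b_def)
        qed
      qed
      also have "\<dots> = ?rho * S" unfolding bb[symmetric] sum_sq_vec using b by (simp add: sum_distrib_left)
      finally show ?thesis .
    qed
    have Htw: "transpose_mat H *\<^sub>v w \<in> carrier_vec K" using H w by (intro mult_mat_vec_carrier[OF _ w], auto)
    have "S = (transpose_mat H *\<^sub>v w) \<bullet> x"
      unfolding wy[symmetric] y_def using transpose_vec_mult_scalar[OF H x w] by simp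
    hence "S^2 \<le> ((transpose_mat H *\<^sub>v w) \<bullet> (transpose_mat H *\<^sub>v w)) * (x \<bullet> x)"
      using cs_vec[OF Htw x] by simp
    also have "\<dots> \<le> (?rho * S) * (x \<bullet> x)" unfolding Ht_norm[OF w]
      by (rule mult_right_mono[OF wGw real_sq_nonneg])
    finally have "S^2 \<le> (?rho * (x \<bullet> x)) * S" by (simp add: mult_ac)
    hence "S \<le> ?rho * (x \<bullet> x)"
      by (rule sq_le_cancel, insert rho_nonneg_all[OF k] real_sq_nonneg[of x], auto)
    hence "1 / Mt * S \<le> 1 / Mt * (?rho * (x \<bullet> x))" using Mt by (intro mult_left_mono, auto)
    thus "x \<bullet> ((transpose_mat H * transpose_mat (Popt Mt T R) * Popt Mt T R * H) *\<^sub>v x) \<le> 1 / Mt * ?rho * (x \<bullet> x)"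
      unfolding xAx by (simp add: mult.assoc)
  qed (insert p, auto)
qed


lemma LBopt:
  assumes p: "1 \<le> p" "p \<le> K" "p \<le> m" and r: "0 < rho2 (a + p - 1)"
  shows "(1 / Mt) * rho2 (a + p - 1) \<le> lambda p (transpose_mat H * transpose_mat (Popt Mt T R) * Popt Mt T R * H)"
proof -
  have c: "0 < 1 / Mt" using Mt by simp
  note Pc = Popt_carrier and PP = PoptPt
  let ?rho = "rho2 (a + p - 1)"
  have k: "1 \<le> a + p - 1" "a + p - 1 \<le> N" using a1 am p by auto
  define Ek :: "real mat" where "Ek = mat m p (\<lambda>(i,j). if i = j then 1 else 0)"
  have Ek: "Ek \<in> carrier_mat m p" unfolding Ek_def by auto
  show ?thesis
  proof (rule LBgen[OF Pc PP c, of "T * Ek" p ?rho])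
    show "T * Ek \<in> carrier_mat m p" using T Ek by auto
    fix z :: "real vec" assume z: "z \<in> carrier_vec p" "z \<noteq> 0\<^sub>v p"
    define v where "v = Ek *\<^sub>v z"
    have v: "v \<in> carrier_vec m" unfolding v_def using Ek z by auto
    have vi: "v $ i = (if i < p then z $ i else 0)" if "i < m" for i
    proof -
      have "v $ i = (\<Sum>j\<in>{0..<p}. (if i = j then 1 else 0) * z $ j)"
        unfolding v_def Ek_def using that z by (simp add: scalar_prod_def)
      also have "\<dots> = (\<Sum>j\<in>{0..<p}. if i = j then z $ j else 0)" by (rule sum.cong, auto)
      also have "\<dots> = (if i < p then z $ i else 0)" by simp
      finally show ?thesis .
    qed
    have TEz: "(T * Ek) *\<^sub>v z = T *\<^sub>v v" unfolding v_def using T Ek z by (simp add: assoc_mult_mat_vec[of _ m m _ p])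
    have Tv: "T *\<^sub>v v \<noteq> 0\<^sub>v m"
    proof
      assume "T *\<^sub>v v = 0\<^sub>v m"
      hence "v = 0\<^sub>v m" using QtQ_vec[OF T TtT v] T by auto
      hence "z $ i = 0" if "i < p" for i using vi[of i] that p by auto
      hence "z = 0\<^sub>v p" using z by (intro eq_vecI, auto)
      thus False using z by auto
    qed
    define y where "y = transpose_mat (Popt Mt T R) *\<^sub>v ((T * Ek) *\<^sub>v z)"
    have Rt: "transpose_mat R \<in> carrier_mat N m" using R_carrier by auto
    have yeq: "y = (1 / sqrt Mt) \<cdot>\<^sub>v (transpose_mat R *\<^sub>v v)"
    proof -
      have "y = (1 / sqrt Mt) \<cdot>\<^sub>v ((transpose_mat R * transpose_mat T) *\<^sub>v (T *\<^sub>v v))"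
        unfolding y_def TEz Popt_tr using R_carrier T v by (simp add: smult_mat_vec[of _ N m])
      also have "(transpose_mat R * transpose_mat T) *\<^sub>v (T *\<^sub>v v) = transpose_mat R *\<^sub>v (transpose_mat T *\<^sub>v (T *\<^sub>v v))"
        using R_carrier T v by (simp add: assoc_mult_mat_vec[of _ N m _ m])
      also have "transpose_mat T *\<^sub>v (T *\<^sub>v v) = v" by (rule QtQ_vec[OF T TtT v])
      finally show ?thesis .
    qed
    have y: "y \<in> carrier_vec N" unfolding yeq using Rt v by auto
    have orth: "u i \<bullet> y = 0" if i: "a + p - 1 < i" "i \<le> N" for i
    proof -
      have ui: "u i \<in> carrier_vec N" using u_dim[of i] i k by auto
      have "u i \<bullet> (transpose_mat R *\<^sub>v v) = (R *\<^sub>v u i) \<bullet> v"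
      proof -
        have "(transpose_mat R *\<^sub>v v) \<bullet> u i = v \<bullet> (R *\<^sub>v u i)" by (rule transpose_vec_mult_scalar[OF R_carrier ui v])
        moreover have "u i \<bullet> (transpose_mat R *\<^sub>v v) = (transpose_mat R *\<^sub>v v) \<bullet> u i"
          by (rule comm_scalar_prod[of _ N], insert ui Rt v, auto)
        moreover have "v \<bullet> (R *\<^sub>v u i) = (R *\<^sub>v u i) \<bullet> v"
          by (rule comm_scalar_prod[of _ m], insert ui R_carrier v, auto)
        ultimately show ?thesis by simp
      qed
      also have "\<dots> = (\<Sum>j\<in>{0..<m}. (R *\<^sub>v u i) $ j * v $ j)"
        unfolding scalar_prod_def using v by simp
      also have "\<dots> = (\<Sum>j\<in>{0..<m}. (u (a + j) \<bullet> u i) * v $ j)"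
        by (rule sum.cong, insert R_mv[OF ui], auto)
      also have "\<dots> = 0"
      proof (rule sum.neutral, rule ballI)
        fix j assume "j \<in> {0..<m}"
        hence j: "j < m" by auto
        show "(u (a + j) \<bullet> u i) * v $ j = 0"
        proof (cases "j < p")
          case True
          hence "u (a + j) \<bullet> u i = 0" using u_orth[of "a + j" i] i a1 am j k by auto
          thus ?thesis by simp
        next
          case False thus ?thesis using vi[OF j] by simp
        qed
      qed
      finally show ?thesis unfolding yeq using ui Rt v by simp
    qed
    have "?rho * (y \<bullet> y) \<le> y \<bullet> ((H * transpose_mat H) *\<^sub>v y)"
      by (rule G_lower[OF y k orth])
    thus "(T * Ek) *\<^sub>v z \<noteq> 0\<^sub>v m \<and>
       ?rho * ((transpose_mat (Popt Mt T R) *\<^sub>v ((T * Ek) *\<^sub>v z)) \<bullet> (transpose_mat (Popt Mt T R) *\<^sub>v ((T * Ek) *\<^sub>v z)))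
       \<le> (transpose_mat (Popt Mt T R) *\<^sub>v ((T * Ek) *\<^sub>v z)) \<bullet> ((H * transpose_mat H) *\<^sub>v (transpose_mat (Popt Mt T R) *\<^sub>v ((T * Ek) *\<^sub>v z)))"
      unfolding y_def[symmetric] using Tv TEz by simp
  qed (insert p r, auto)
qed

end


lemma LB_oM:
  assumes P: "P \<in> carrier_mat m N" and PP: "P * transpose_mat P = c \<cdot>\<^sub>m 1\<^sub>m m" and c: "0 < c"
    and m: "1 \<le> m" "m \<le> K" "m \<le> N" and r: "0 < rho2 N"
  shows "c * rho2 N \<le> lambda m (transpose_mat H * transpose_mat P * P * H)"
proof (rule LBgen[OF P PP c, of "1\<^sub>m m" m "rho2 N"])
  fix z :: "real vec" assume z: "z \<in> carrier_vec m" "z \<noteq> 0\<^sub>v m"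
  have y: "transpose_mat P *\<^sub>v z \<in> carrier_vec N" using P z by (intro mult_mat_vec_carrier[OF _ z(1)], auto)
  have "rho2 N * ((transpose_mat P *\<^sub>v z) \<bullet> (transpose_mat P *\<^sub>v z)) \<le>
      (transpose_mat P *\<^sub>v z) \<bullet> ((H * transpose_mat H) *\<^sub>v (transpose_mat P *\<^sub>v z))"
    by (rule G_lower[OF y], insert m, auto)
  thus "1\<^sub>m m *\<^sub>v z \<noteq> 0\<^sub>v m \<and> rho2 N * ((transpose_mat P *\<^sub>v (1\<^sub>m m *\<^sub>v z)) \<bullet> (transpose_mat P *\<^sub>v (1\<^sub>m m *\<^sub>v z)))
     \<le> (transpose_mat P *\<^sub>v (1\<^sub>m m *\<^sub>v z)) \<bullet> ((H * transpose_mat H) *\<^sub>v (transpose_mat P *\<^sub>v (1\<^sub>m m *\<^sub>v z)))"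
    using z by simp
qed (insert m r, auto)

lemma LB_o1:
  assumes P: "P \<in> carrier_mat m N" and PP: "P * transpose_mat P = c \<cdot>\<^sub>m 1\<^sub>m m" and c: "0 < c"
    and m: "1 \<le> m" "m \<le> N" and K1: "1 \<le> K" and r: "0 < rho2 (N - m + 1)"
  shows "c * rho2 (N - m + 1) \<le> lambda 1 (transpose_mat H * transpose_mat P * P * H)"
proof -
  let ?k = "N - m + 1"
  have k: "1 \<le> ?k" "?k \<le> N" using m by auto
  define cs where "cs = map (\<lambda>i. P *\<^sub>v u i) [?k + 1..<N + 1]"
  have csc: "set cs \<subseteq> carrier_vec m" unfolding cs_def using P k by (auto intro!: mult_mat_vec_carrier[of _ m N] u_dim)
  have lcs: "length cs < m" unfolding cs_def using m by auto
  from ker_exists[OF csc lcs] obtain z0 where z0: "z0 \<in> carrier_vec m" "z0 \<noteq> 0\<^sub>v m"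
    and z0c: "\<forall>c\<in>set cs. c \<bullet> z0 = 0" by auto
  define E :: "real mat" where "E = mat m 1 (\<lambda>(i,j). z0 $ i)"
  have E: "E \<in> carrier_mat m 1" unfolding E_def by auto
  show ?thesis
  proof (rule LBgen[OF P PP c E _ K1 r])
    fix z :: "real vec" assume z: "z \<in> carrier_vec 1" "z \<noteq> 0\<^sub>v 1"
    have z00: "z $ 0 \<noteq> 0"
    proof
      assume "z $ 0 = 0"
      hence "z = 0\<^sub>v 1" using z by (intro eq_vecI, auto)
      thus False using z by auto
    qed
    have Ez: "E *\<^sub>v z = (z $ 0) \<cdot>\<^sub>v z0"
      unfolding E_def using z z0 by (intro eq_vecI, auto simp: scalar_prod_def)
    have Ez0: "E *\<^sub>v z \<noteq> 0\<^sub>v m"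
    proof
      assume E0: "E *\<^sub>v z = 0\<^sub>v m"
      have "z0 $ i = 0" if i: "i < m" for i
      proof -
        have "(z $ 0) * z0 $ i = (E *\<^sub>v z) $ i" unfolding Ez using i z0 by simp
        also have "\<dots> = 0" unfolding E0 using i by simp
        finally show ?thesis using z00 by simp
      qed
      hence "z0 = 0\<^sub>v m" using z0 by (intro eq_vecI, auto)
      thus False using z0 by auto
    qed
    have Ptz0: "transpose_mat P *\<^sub>v z0 \<in> carrier_vec N" using P z0 by (intro mult_mat_vec_carrier[OF _ z0(1)], auto)
    define y where "y = transpose_mat P *\<^sub>v (E *\<^sub>v z)"
    have yeq: "y = (z $ 0) \<cdot>\<^sub>v (transpose_mat P *\<^sub>v z0)"
      unfolding y_def Ez using P z0 by (intro eq_vecI, auto)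
    have y: "y \<in> carrier_vec N" unfolding yeq using Ptz0 by auto
    have orth: "u i \<bullet> y = 0" if i: "?k < i" "i \<le> N" for i
    proof -
      have ui: "u i \<in> carrier_vec N" using u_dim[of i] i k by auto
      have "(transpose_mat P *\<^sub>v z0) \<bullet> u i = z0 \<bullet> (P *\<^sub>v u i)" by (rule transpose_vec_mult_scalar[OF P ui z0(1)])
      also have "\<dots> = (P *\<^sub>v u i) \<bullet> z0" by (rule comm_scalar_prod[of _ m], insert z0 P ui, auto)
      also have "\<dots> = 0" using z0c i unfolding cs_def by auto
      finally have "(transpose_mat P *\<^sub>v z0) \<bullet> u i = 0" .
      hence "u i \<bullet> (transpose_mat P *\<^sub>v z0) = 0" using comm_scalar_prod[OF ui Ptz0] by simp
      thus ?thesis unfolding yeq using ui Ptz0 by simp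
    qed
    have "rho2 ?k * (y \<bullet> y) \<le> y \<bullet> ((H * transpose_mat H) *\<^sub>v y)" by (rule G_lower[OF y k orth])
    thus "E *\<^sub>v z \<noteq> 0\<^sub>v m \<and> rho2 ?k * ((transpose_mat P *\<^sub>v (E *\<^sub>v z)) \<bullet> (transpose_mat P *\<^sub>v (E *\<^sub>v z)))
       \<le> (transpose_mat P *\<^sub>v (E *\<^sub>v z)) \<bullet> ((H * transpose_mat H) *\<^sub>v (transpose_mat P *\<^sub>v (E *\<^sub>v z)))"
      unfolding y_def[symmetric] using Ez0 by simp
  qed simp
qed

end




lemma frac_mono_aux:
  fixes n1 n2 d1 d2 :: real
  assumes "0 < n1" "n1 \<le> n2" "0 < d2" "d2 \<le> d1"
  shows "n1 / d1 \<le> n2 / d2"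
  using assms by (intro frac_le, auto)

theorem corollary1:
  fixes N K M1 M2 Nb :: nat
    and H :: "real mat"
    and u :: "nat \<Rightarrow> real vec"
    and rho2 :: "nat \<Rightarrow> real"
    and sx2 s02 PFA :: real
    and Ts To :: "real mat"
  assumes NK: "N \<ge> K" "K \<ge> 1"
    and H: "H \<in> carrier_mat N K" "vec_space.rank N H = K"
    and u_dim: "\<And>i. 1 \<le> i \<Longrightarrow> i \<le> N \<Longrightarrow> u i \<in> carrier_vec N"
    and u_orth: "\<And>i j. 1 \<le> i \<Longrightarrow> i \<le> N \<Longrightarrow> 1 \<le> j \<Longrightarrow> j \<le> N \<Longrightarrow>
                   u i \<bullet> u j = (if i = j then 1 else 0)"
    and u_eig: "\<And>i. 1 \<le> i \<Longrightarrow> i \<le> N \<Longrightarrow> (H * transpose_mat H) *\<^sub>v u i = rho2 i \<cdot>\<^sub>v u i"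
    and rho_sorted: "\<And>i j. 1 \<le> i \<Longrightarrow> i \<le> j \<Longrightarrow> j \<le> N \<Longrightarrow> rho2 j \<le> rho2 i"
    and rho_nonneg: "rho2 N \<ge> 0"
    and rho_strict: "rho2 1 > rho2 N"
    and M: "M1 \<ge> 1" "M2 \<ge> 1" "M1 + M2 \<le> N"
    and Nb: "Nb \<ge> 1"
    and sig: "sx2 > 0" "s02 > 0"
    and PFA: "0 < PFA" "PFA < 1"
    and Ts: "Ts \<in> carrier_mat M1 M1" "Ts * transpose_mat Ts = 1\<^sub>m M1"
    and To: "To \<in> carrier_mat M2 M2" "To * transpose_mat To = 1\<^sub>m M2"
  defines "Phis_opt \<equiv> (1 / sqrt (real (M1 + M2))) \<cdot>\<^sub>m (Ts * rows_of M1 N 1 u)"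
    and "Phio_opt \<equiv> (1 / sqrt (real (M1 + M2))) \<cdot>\<^sub>m (To * rows_of M2 N (N - M2 + 1) u)"
  shows "admissible N M1 M2 Phis_opt Phio_opt \<and>
         (\<forall>Phis Phio. admissible N M1 M2 Phis Phio \<longrightarrow>
            PD_lb H sx2 s02 M1 M2 Nb PFA Phis Phio \<le> PD_lb H sx2 s02 M1 M2 Nb PFA Phis_opt Phio_opt \<and>
            PD_ub H sx2 s02 M1 M2 Nb PFA Phis Phio \<le> PD_ub H sx2 s02 M1 M2 Nb PFA Phis_opt Phio_opt)"
proof -
  interpret hs: hsetup N K H u rho2
    by (unfold_locales, insert H u_dim u_orth u_eig rho_sorted rho_nonneg, auto)
  define Mt where "Mt = real (M1 + M2)"
  define c where "c = 1 / Mt"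
  have Mt: "0 < Mt" unfolding Mt_def using M by auto
  have c: "0 < c" unfolding c_def using Mt by auto
  define ao where "ao = N - M2 + 1"
  define Rs where "Rs = rows_of M1 N 1 u"
  define Ro where "Ro = rows_of M2 N ao u"
  have s_a1: "1 \<le> (1::nat)" and s_am: "1 + M1 \<le> N + 1" using M by auto
  have o_a1: "1 \<le> ao" and o_am: "ao + M2 \<le> N + 1" unfolding ao_def using M by auto
  have Ps_def: "Phis_opt = Popt Mt Ts Rs" unfolding Phis_opt_def Popt_def Mt_def Rs_def ..
  have Po_def: "Phio_opt = Popt Mt To Ro" unfolding Phio_opt_def Popt_def Mt_def Ro_def ao_def ..
  note Ps_c = hs.Popt_carrier[OF s_a1 s_am Ts Mt, folded Rs_def Ps_def]
  note Ps_PP = hs.PoptPt[OF s_a1 s_am Ts Mt, folded Rs_def Ps_def c_def]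
  note Po_c = hs.Popt_carrier[OF o_a1 o_am To Mt, folded Ro_def Po_def]
  note Po_PP = hs.PoptPt[OF o_a1 o_am To Mt, folded Ro_def Po_def c_def]
  have Rs_c: "Rs \<in> carrier_mat M1 N" unfolding Rs_def rows_of_def by auto
  have Ro_c: "Ro \<in> carrier_mat M2 N" unfolding Ro_def rows_of_def by auto
  have RsRo: "Rs * transpose_mat Ro = 0\<^sub>m M1 M2"
  proof (rule eq_matI)
    fix i j assume "i < dim_row (0\<^sub>m M1 M2 :: real mat)" "j < dim_col (0\<^sub>m M1 M2 :: real mat)"
    hence ij: "i < M1" "j < M2" by auto
    have "(Rs * transpose_mat Ro) $$ (i, j) = row Rs i \<bullet> row Ro j" using ij Rs_c Ro_c by simp
    also have "\<dots> = u (1 + i) \<bullet> u (ao + j)"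
      using hs.R_row[OF s_a1 s_am Ts Mt, of i] hs.R_row[OF o_a1 o_am To Mt, of j] ij unfolding Rs_def Ro_def by simp
    also have "\<dots> = 0" using ij M unfolding ao_def by (subst u_orth, auto)
    finally show "(Rs * transpose_mat Ro) $$ (i, j) = 0\<^sub>m M1 M2 $$ (i, j)" using ij by simp
  qed (insert Rs_c Ro_c, auto)
  have cross: "Phis_opt * transpose_mat Phio_opt = 0\<^sub>m M1 M2"
  proof -
    have "Ts * Rs * (transpose_mat Ro * transpose_mat To) = Ts * (Rs * (transpose_mat Ro * transpose_mat To))"
      by (rule assoc_mult_mat[of _ M1 M1 _ N _ M2], insert Ts Rs_c Ro_c To, auto)
    also have "Rs * (transpose_mat Ro * transpose_mat To) = (Rs * transpose_mat Ro) * transpose_mat To"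
      by (rule assoc_mult_mat[symmetric, of _ M1 N _ M2 _ M2], insert Rs_c Ro_c To, auto)
    also have "\<dots> = 0\<^sub>m M1 M2" unfolding RsRo using To by simp
    also have "Ts * 0\<^sub>m M1 M2 = 0\<^sub>m M1 M2" using Ts by simp
    finally have e: "Ts * Rs * (transpose_mat Ro * transpose_mat To) = 0\<^sub>m M1 M2" .
    have "Phis_opt * transpose_mat Phio_opt =
      (1 / sqrt Mt * (1 / sqrt Mt)) \<cdot>\<^sub>m (Ts * Rs * (transpose_mat Ro * transpose_mat To))"
      unfolding Ps_def Po_def hs.Popt_tr[OF o_a1 o_am To Mt, folded Ro_def] unfolding Popt_def using Ts Rs_c Ro_c To
      by (simp add: mult_smult_assoc_mat[of _ M1 N _ M2] mult_smult_distrib[of _ M1 N _ M2] smult_smult_mat' del: real_sqrt_mult_self)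
    thus ?thesis unfolding e by simp
  qed
  have adm_opt: "admissible N M1 M2 Phis_opt Phio_opt"
    unfolding admissible_def using Ps_c Po_c append_rows_orth[OF Ps_c Po_c, of c] Ps_PP Po_PP cross
    unfolding c_def Mt_def by simp
  have lam_out: "lambda p (transpose_mat H * transpose_mat X * X * H) = 0" if "K < p" for p X
    unfolding lambda_def using H that by auto
  have rnn: "0 \<le> rho2 i" if "1 \<le> i" "i \<le> N" for i using hs.rho_nonneg_all that by auto
  have K1: "1 \<le> K" using NK by auto
  have "\<forall>Phis Phio. admissible N M1 M2 Phis Phio \<longrightarrow>
            PD_lb H sx2 s02 M1 M2 Nb PFA Phis Phio \<le> PD_lb H sx2 s02 M1 M2 Nb PFA Phis_opt Phio_opt \<and>
            PD_ub H sx2 s02 M1 M2 Nb PFA Phis Phio \<le> PD_ub H sx2 s02 M1 M2 Nb PFA Phis_opt Phio_opt"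
  proof (intro allI impI)
    fix Phis Phio assume adm: "admissible N M1 M2 Phis Phio"
    hence Phis: "Phis \<in> carrier_mat M1 N" and Phio: "Phio \<in> carrier_mat M2 N"
      and app: "(Phis @\<^sub>r Phio) * transpose_mat (Phis @\<^sub>r Phio) = c \<cdot>\<^sub>m 1\<^sub>m (M1 + M2)"
      unfolding admissible_def c_def Mt_def by auto
    from app[unfolded append_rows_orth[OF Phis Phio]]
    have PsPs: "Phis * transpose_mat Phis = c \<cdot>\<^sub>m 1\<^sub>m M1" and PoPo: "Phio * transpose_mat Phio = c \<cdot>\<^sub>m 1\<^sub>m M2" by auto
    let ?As = "transpose_mat H * transpose_mat Phis * Phis * H"
    let ?Ao = "transpose_mat H * transpose_mat Phio * Phio * H"
    let ?As' = "transpose_mat H * transpose_mat Phis_opt * Phis_opt * H"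
    let ?Ao' = "transpose_mat H * transpose_mat Phio_opt * Phio_opt * H"
    have LBs: "c * rho2 p \<le> lambda p ?As'" if p: "1 \<le> p" "p \<le> K" "p \<le> M1" for p
    proof (cases "0 < rho2 p")
      case True
      have r: "0 < rho2 (1 + p - 1)" using True by simp
      from hs.LBopt[OF s_a1 s_am Ts Mt p r] show ?thesis
        unfolding Ps_def Rs_def c_def by simp
    next
      case False
      hence "rho2 p = 0" using rnn[of p] p M by auto
      thus ?thesis using hs.AP_nonneg[OF Ps_c Ps_PP c, of p] by simp
    qed
    have lam_s_M1: "lambda M1 ?As \<le> lambda M1 ?As'"
    proof (cases "M1 \<le> K")
      case True
      have "lambda M1 ?As \<le> c * rho2 M1" by (rule hs.UBgen[OF Phis PsPs c], insert M True, auto)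
      also have "\<dots> \<le> lambda M1 ?As'" by (rule LBs, insert M True, auto)
      finally show ?thesis .
    qed (insert lam_out, auto)
    have lam_s_1: "lambda 1 ?As \<le> lambda 1 ?As'"
    proof -
      have "lambda 1 ?As \<le> c * rho2 1" by (rule hs.UBgen[OF Phis PsPs c], insert M K1, auto)
      also have "\<dots> \<le> lambda 1 ?As'" by (rule LBs, insert M K1, auto)
      finally show ?thesis .
    qed
    have lam_o_1: "lambda 1 ?Ao' \<le> lambda 1 ?Ao"
    proof -
      have "lambda 1 ?Ao' \<le> (1 / Mt) * rho2 (ao + 1 - 1)"
        using hs.UBopt[OF o_a1 o_am To Mt, of 1] M K1 unfolding Po_def Ro_def by simp
      also have "\<dots> = c * rho2 (N - M2 + 1)" unfolding c_def ao_def by simp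
      also have "\<dots> \<le> lambda 1 ?Ao"
      proof (cases "0 < rho2 (N - M2 + 1)")
        case True
        show ?thesis by (rule hs.LB_o1[OF Phio PoPo c _ _ K1 True], insert M, auto)
      next
        case False
        hence "rho2 (N - M2 + 1) = 0" using rnn[of "N - M2 + 1"] M by auto
        thus ?thesis using hs.AP_nonneg[OF Phio PoPo c, of 1] by simp
      qed
      finally show ?thesis .
    qed
    have lam_o_M2: "lambda M2 ?Ao' \<le> lambda M2 ?Ao"
    proof (cases "M2 \<le> K")
      case True
      have "lambda M2 ?Ao' \<le> (1 / Mt) * rho2 (ao + M2 - 1)"
        using hs.UBopt[OF o_a1 o_am To Mt, of M2] M True unfolding Po_def Ro_def by simp
      also have "\<dots> = c * rho2 N" unfolding c_def ao_def using M by simp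
      also have "\<dots> \<le> lambda M2 ?Ao"
      proof (cases "0 < rho2 N")
        case True
        show ?thesis by (rule hs.LB_oM[OF Phio PoPo c _ _ _ True], insert M \<open>M2 \<le> K\<close>, auto)
      next
        case False
        hence "rho2 N = 0" using rho_nonneg by auto
        thus ?thesis using hs.AP_nonneg[OF Phio PoPo c, of M2] by simp
      qed
      finally show ?thesis .
    qed (insert lam_out, auto)
    show "PD_lb H sx2 s02 M1 M2 Nb PFA Phis Phio \<le> PD_lb H sx2 s02 M1 M2 Nb PFA Phis_opt Phio_opt \<and>
          PD_ub H sx2 s02 M1 M2 Nb PFA Phis Phio \<le> PD_ub H sx2 s02 M1 M2 Nb PFA Phis_opt Phio_opt"
    proof -
      have nn: "0 \<le> lambda p ?As" "0 \<le> lambda p ?Ao" "0 \<le> lambda p ?As'" "0 \<le> lambda p ?Ao'" for p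
        using hs.AP_nonneg[OF Phis PsPs c] hs.AP_nonneg[OF Phio PoPo c]
          hs.AP_nonneg[OF Ps_c Ps_PP c] hs.AP_nonneg[OF Po_c Po_PP c] by auto
      have pos: "0 < s02 + sx2 * lambda p X" if "0 \<le> lambda p X" for p X
        using sig that by (smt (verit) mult_nonneg_nonneg)
      have mono: "s02 + sx2 * l1 \<le> s02 + sx2 * l2" if "l1 \<le> l2" for l1 l2
        using sig that by (smt (verit) mult_left_mono)
      have d12: "0 < M1 * Nb" "0 < M2 * Nb" using M Nb by auto
      let ?g = "QF_inv (M1 * Nb) (M2 * Nb) PFA"
      have lb: "eta_lb H sx2 s02 M1 M2 Phis_opt Phio_opt \<le> eta_lb H sx2 s02 M1 M2 Phis Phio"
        unfolding eta_lb_def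
        by (rule frac_mono_aux[OF pos[OF nn(4)] mono[OF lam_o_1] pos[OF nn(1)] mono[OF lam_s_M1]])
      have lbp: "0 < eta_lb H sx2 s02 M1 M2 Phis_opt Phio_opt"
        unfolding eta_lb_def by (rule divide_pos_pos[OF pos[OF nn(4)] pos[OF nn(3)]])
      have ub: "eta_ub H sx2 s02 M1 M2 Phis_opt Phio_opt \<le> eta_ub H sx2 s02 M1 M2 Phis Phio"
        unfolding eta_ub_def
        by (rule frac_mono_aux[OF pos[OF nn(4)] mono[OF lam_o_M2] pos[OF nn(1)] mono[OF lam_s_1]])
      have ubp: "0 < eta_ub H sx2 s02 M1 M2 Phis_opt Phio_opt"
        unfolding eta_ub_def by (rule divide_pos_pos[OF pos[OF nn(4)] pos[OF nn(3)]])
      show ?thesis unfolding PD_lb_def PD_ub_def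
        using QF_mono_scaled[OF d12 lbp lb, of ?g] QF_mono_scaled[OF d12 ubp ub, of ?g] by simp
    qed
  qed
  with adm_opt show ?thesis by blast
qed


end
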